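(* Let $n\ge 2$, let $k\neq 0$ be an integer, and let $x\in\mathcal{O}_n$ satisfy $\omega_t(x)=t^kx$ for all $t\in\mathbb{T}$. If $x$ is normal, then $x=0$.
   Context: $\mathcal{O}_n=C^*(s_1,\dots,s_n)$ is the Cuntz algebra, generated by isometries $s_1,\dots,s_n$ with $\sum_{i=1}^n s_is_i^*=1$, and $\omega$ is the standard circle action, $\omega_t(s_i)=ts_i$, $t\in\mathbb{T}$. *)

theory Defs
  imports "HOL-Analysis.Analysis"
begin

text \<open>A unital C*-algebra: a real Banach algebra with unit on the type 'a, together with
  a complex scalar multiplication sc extending the real one and an involution st
  satisfying the C*-identity.\<close>

definition cstar_algebra ::
  "(complex \<Rightarrow> 'a::{real_normed_algebra_1,banach} \<Rightarrow> 'a) \<Rightarrow> ('a \<Rightarrow> 'a) \<Rightarrow> bool" where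
  "cstar_algebra sc st \<longleftrightarrow>
     (\<forall>r x. sc (complex_of_real r) x = r *\<^sub>R x) \<and>
     (\<forall>a b x. sc (a + b) x = sc a x + sc b x) \<and>
     (\<forall>a x y. sc a (x + y) = sc a x + sc a y) \<and>
     (\<forall>a b x. sc a (sc b x) = sc (a * b) x) \<and>
     (\<forall>a x y. sc a (x * y) = sc a x * y \<and> sc a (x * y) = x * sc a y) \<and>
     (\<forall>a x. norm (sc a x) = cmod a * norm x) \<and>
     (\<forall>x. st (st x) = x) \<and>
     (\<forall>x y. st (x + y) = st x + st y) \<and>
     (\<forall>a x. st (sc a x) = sc (cnj a) (st x)) \<and>
     (\<forall>x y. st (x * y) = st y * st x) \<and>
     (\<forall>x. norm (st x * x) = (norm x)\<^sup>2)"

definition cstar_gen ::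
  "(complex \<Rightarrow> 'a::{real_normed_algebra_1,banach} \<Rightarrow> 'a) \<Rightarrow> ('a \<Rightarrow> 'a) \<Rightarrow> 'a set \<Rightarrow> 'a set" where
  "cstar_gen sc st S = \<Inter> {B. S \<subseteq> B \<and> 1 \<in> B \<and> closed B \<and>
      (\<forall>x\<in>B. \<forall>y\<in>B. x + y \<in> B \<and> x * y \<in> B) \<and>
      (\<forall>c. \<forall>x\<in>B. sc c x \<in> B) \<and> (\<forall>x\<in>B. st x \<in> B)}"

definition star_hom ::
  "(complex \<Rightarrow> 'a::{real_normed_algebra_1,banach} \<Rightarrow> 'a) \<Rightarrow> ('a \<Rightarrow> 'a) \<Rightarrow> ('a \<Rightarrow> 'a) \<Rightarrow> bool" where
  "star_hom sc st f \<longleftrightarrow>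
     (\<forall>x y. f (x + y) = f x + f y) \<and> (\<forall>x y. f (x * y) = f x * f y) \<and>
     (\<forall>c x. f (sc c x) = sc c (f x)) \<and> (\<forall>x. f (st x) = st (f x)) \<and> f 1 = 1"

end

theory Submission
  imports Defs
begin



lemma inv_unique:
  fixes x y z :: "'b::ring_1"
  assumes "y * x = 1" "x * z = 1" shows "y = z"
proof -
  have "y = y * (x * z)" using assms by simp
  also have "\<dots> = (y * x) * z" by (simp add: mult.assoc)
  finally show ?thesis using assms by simp
qed

lemma inv_commute:
  fixes x w a :: "'b::ring_1"
  assumes "w * x = 1" "x * w = 1" "a * x = x * a" shows "a * w = w * a"
proof -
  have "a * w = w * x * a * w" using assms by simp
  also have "\<dots> = w * (x * a) * w" by (simp add: mult.assoc)
  also have "\<dots> = w * (a * x) * w" using assms by simp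
  also have "\<dots> = w * a * (x * w)" by (simp add: mult.assoc)
  finally show ?thesis using assms by simp
qed

lemma neumann:
  fixes u :: "'b::{real_normed_algebra_1,banach}"
  assumes u: "norm u < 1"
  shows "\<exists>w. w * (1 - u) = 1 \<and> (1 - u) * w = 1 \<and> norm w \<le> 1 / (1 - norm u)
           \<and> norm (w - 1) \<le> norm u / (1 - norm u)"
proof -
  have g: "summable (\<lambda>i. norm u ^ i)" using u by (simp add: summable_geometric)
  have ns: "summable (\<lambda>i. norm (u ^ i))"
    by (rule summable_comparison_test[OF _ g]) (auto intro: norm_power_ineq)
  hence S: "summable (\<lambda>i. u ^ i)" by (rule summable_norm_cancel)
  define w where "w = (\<Sum>i. u ^ i)"
  have "u * w = (\<Sum>i. u * u ^ i)" unfolding w_def using suminf_mult[OF S] by simp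
  also have "\<dots> = (\<Sum>i. u ^ Suc i)" by simp
  also have "\<dots> = w - 1" unfolding w_def using suminf_split_head[OF S] by simp
  finally have uw: "u * w = w - 1" .
  have "w * u = (\<Sum>i. u ^ i * u)" unfolding w_def using suminf_mult2[OF S] by simp
  also have "\<dots> = (\<Sum>i. u ^ Suc i)" by (metis power_Suc power_Suc2)
  also have "\<dots> = w - 1" unfolding w_def using suminf_split_head[OF S] by simp
  finally have wu: "w * u = w - 1" .
  have nw: "norm w \<le> 1 / (1 - norm u)"
  proof -
    have "norm w \<le> (\<Sum>i. norm u ^ i)" unfolding w_def
      by (rule norm_suminf_le[OF _ g]) (rule norm_power_ineq)
    also have "\<dots> = 1 / (1 - norm u)" using u by (simp add: suminf_geometric)
    finally show ?thesis .
  qed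
  have "norm (w - 1) = norm (u * w)" using uw by simp
  also have "\<dots> \<le> norm u * norm w" by (rule norm_mult_ineq)
  also have "\<dots> \<le> norm u * (1 / (1 - norm u))" by (rule mult_left_mono[OF nw]) simp
  finally have n1: "norm (w - 1) \<le> norm u / (1 - norm u)" by simp
  show ?thesis
    by (rule exI[of _ w]) (use uw wu nw n1 in \<open>auto simp: algebra_simps\<close>)
qed

locale cst =
  fixes sc :: "complex \<Rightarrow> 'a::{real_normed_algebra_1,banach} \<Rightarrow> 'a" and st :: "'a \<Rightarrow> 'a"
  assumes cs: "cstar_algebra sc st"
begin

lemma sc_real: "sc (complex_of_real r) x = r *\<^sub>R x" using cs[unfolded cstar_algebra_def, THEN conjunct1] by simp
lemma sc_add_left: "sc (a + b) x = sc a x + sc b x" using cs[unfolded cstar_algebra_def, THEN conjunct2, THEN conjunct1] by simp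
lemma sc_add_right: "sc a (x + y) = sc a x + sc a y" using cs[unfolded cstar_algebra_def, THEN conjunct2, THEN conjunct2, THEN conjunct1] by simp
lemma sc_sc: "sc a (sc b x) = sc (a * b) x" using cs[unfolded cstar_algebra_def, THEN conjunct2, THEN conjunct2, THEN conjunct2, THEN conjunct1] by simp
lemma sc_mult_left: "sc a x * y = sc a (x * y)" using cs[unfolded cstar_algebra_def, THEN conjunct2, THEN conjunct2, THEN conjunct2, THEN conjunct2, THEN conjunct1] by metis
lemma sc_mult_right: "x * sc a y = sc a (x * y)" using cs[unfolded cstar_algebra_def, THEN conjunct2, THEN conjunct2, THEN conjunct2, THEN conjunct2, THEN conjunct1] by metis
lemma norm_sc: "norm (sc a x) = cmod a * norm x" using cs[unfolded cstar_algebra_def, THEN conjunct2, THEN conjunct2, THEN conjunct2, THEN conjunct2, THEN conjunct2, THEN conjunct1] by simp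
lemma st_st[simp]: "st (st x) = x" using cs[unfolded cstar_algebra_def, THEN conjunct2, THEN conjunct2, THEN conjunct2, THEN conjunct2, THEN conjunct2, THEN conjunct2, THEN conjunct1] by simp
lemma st_add: "st (x + y) = st x + st y" using cs[unfolded cstar_algebra_def, THEN conjunct2, THEN conjunct2, THEN conjunct2, THEN conjunct2, THEN conjunct2, THEN conjunct2, THEN conjunct2, THEN conjunct1] by simp
lemma st_sc: "st (sc a x) = sc (cnj a) (st x)" using cs[unfolded cstar_algebra_def, THEN conjunct2, THEN conjunct2, THEN conjunct2, THEN conjunct2, THEN conjunct2, THEN conjunct2, THEN conjunct2, THEN conjunct2, THEN conjunct1] by simp
lemma st_mult: "st (x * y) = st y * st x" using cs[unfolded cstar_algebra_def, THEN conjunct2, THEN conjunct2, THEN conjunct2, THEN conjunct2, THEN conjunct2, THEN conjunct2, THEN conjunct2, THEN conjunct2, THEN conjunct2, THEN conjunct1] by simp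
lemma cstar_id: "norm (st x * x) = (norm x)\<^sup>2" using cs[unfolded cstar_algebra_def, THEN conjunct2, THEN conjunct2, THEN conjunct2, THEN conjunct2, THEN conjunct2, THEN conjunct2, THEN conjunct2, THEN conjunct2, THEN conjunct2, THEN conjunct2] by simp

lemma sc_one[simp]: "sc 1 x = x" using sc_real[of 1 x] by simp
lemma sc_zero_left[simp]: "sc 0 x = 0" using sc_real[of 0 x] by simp
lemma sc_zero_right[simp]: "sc a 0 = 0" using sc_add_right[of a 0 0] by simp
lemma sc_minus_right: "sc a (- x) = - sc a x"
  using minus_unique[of "sc a x" "sc a (-x)"] sc_add_right[of a x "-x"] by simp
lemma sc_diff_right: "sc a (x - y) = sc a x - sc a y"
  using sc_add_right[of a x "-y"] sc_minus_right by simp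
lemma sc_minus_left: "sc (- a) x = - sc a x"
  using minus_unique[of "sc a x" "sc (-a) x"] sc_add_left[of a "-a" x] by simp
lemma sc_diff_left: "sc (a - b) x = sc a x - sc b x"
  using sc_add_left[of a "-b" x] sc_minus_left by simp
lemma sc_sum_right: "sc a (sum f A) = (\<Sum>i\<in>A. sc a (f i))"
  by (induction A rule: infinite_finite_induct) (auto simp: sc_add_right)
lemma sc_sum_left: "sc (sum f A) x = (\<Sum>i\<in>A. sc (f i) x)"
  by (induction A rule: infinite_finite_induct) (auto simp: sc_add_left)
lemma sc_of_nat: "sc (of_nat m) x = of_nat m * x"
  using sc_real[of "real m" x] by (simp add: scaleR_conv_of_real)
lemma sc_one_mult: "sc a 1 * x = sc a x" by (simp add: sc_mult_left)
lemma mult_sc_one: "x * sc a 1 = sc a x" by (simp add: sc_mult_right)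
lemma sc_pow: "(sc a x) ^ m = sc (a ^ m) (x ^ m)"
  by (induction m) (auto simp: sc_mult_left sc_mult_right sc_sc mult.commute)
lemma sc_cancel: "a \<noteq> 0 \<Longrightarrow> sc (inverse a) (sc a x) = x" by (simp add: sc_sc)
lemma norm_sc_one[simp]: "norm (sc a 1) = cmod a" by (simp add: norm_sc)

lemma st_zero[simp]: "st 0 = 0" using st_add[of 0 0] by simp
lemma st_one[simp]: "st 1 = 1"
  by (metis mult_1_right st_mult st_st)
lemma st_minus: "st (- x) = - st x" using minus_unique[of "st x" "st (-x)"] st_add[of x "-x"] by simp
lemma st_diff: "st (x - y) = st x - st y" using st_add[of x "-y"] st_minus by simp
lemma st_sum: "st (sum f A) = (\<Sum>i\<in>A. st (f i))"
  by (induction A rule: infinite_finite_induct) (auto simp: st_add)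
lemma st_pow: "st (x ^ m) = (st x) ^ m"
  by (induction m) (auto simp: st_mult power_commutes)
lemma st_sc_one: "st (sc a 1) = sc (cnj a) 1" by (simp add: st_sc)

lemma norm_st_le: "norm x \<le> norm (st x)"
proof (cases "x = 0")
  case False
  have "(norm x)\<^sup>2 = norm (st x * x)" by (simp add: cstar_id)
  also have "\<dots> \<le> norm (st x) * norm x" by (rule norm_mult_ineq)
  finally have "norm x * norm x \<le> norm (st x) * norm x" by (simp add: power2_eq_square)
  with False show ?thesis by simp
qed simp
lemma norm_st[simp]: "norm (st x) = norm x"
  using norm_st_le[of x] norm_st_le[of "st x"] by simp

lemma cstar_id2: "norm (x * st x) = (norm x)\<^sup>2"
  using cstar_id[of "st x"] by simp

lemma norm_selfadj_sq: "st h = h \<Longrightarrow> norm (h * h) = (norm h)\<^sup>2"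
  using cstar_id[of h] by simp

lemma norm_selfadj_pow2: "st h = h \<Longrightarrow> norm (h ^ (2 ^ j)) = norm h ^ (2 ^ j)"
proof (induction j)
  case (Suc j)
  have sa: "st (h ^ (2^j)) = h ^ (2^j)" using Suc.prems by (simp add: st_pow)
  have "h ^ (2 ^ Suc j) = h ^ (2^j) * h ^ (2^j)" by (simp add: power_add[symmetric] mult_2)
  hence "norm (h ^ (2 ^ Suc j)) = (norm (h ^ (2^j)))\<^sup>2" using norm_selfadj_sq[OF sa] by simp
  also have "\<dots> = norm h ^ (2 ^ Suc j)" using Suc by (simp add: power_mult[symmetric] mult.commute)
  finally show ?case .
qed simp

lemma norm_one_le: "norm (1::'a) = 1" by simp

end



lemma root_sum:
  fixes N :: nat and r :: int
  assumes N: "N > 0" and nd: "\<not> int N dvd r"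
  shows "(\<Sum>j<N. (cis (2*pi/N) powi r) ^ j) = 0"
proof -
  define w where "w = cis (2*pi/N) powi r"
  have w: "w = cis (of_int r * (2*pi/N))" unfolding w_def by (rule cis_power_int)
  have "w ^ N = cis (real N * (of_int r * (2*pi/N)))" unfolding w by (rule Complex.DeMoivre)
  also have "real N * (of_int r * (2*pi/N)) = 2 * pi * of_int r" using N by (simp add: field_simps)
  also have "cis (2 * pi * of_int r) = 1" by (rule cis_multiple_2pi) simp
  finally have wN: "w ^ N = 1" .
  have w1: "w \<noteq> 1"
  proof
    assume "w = 1"
    hence "cos (of_int r * (2*pi/N)) = 1" unfolding w using cis.sel(1)[of "of_int r * (2*pi/N)"] by simp
    then obtain m :: int where m: "of_int r * (2*pi/N) = of_int m * 2 * pi" using cos_one_2pi_int by blast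
    hence "real_of_int r = real_of_int m * real N" using N pi_gt_zero by (simp add: field_simps)
    hence "r = m * int N" by (metis of_int_eq_iff of_int_mult of_int_of_nat_eq)
    thus False using nd by simp
  qed
  have "(\<Sum>j<N. w ^ j) = (w ^ N - 1) / (w - 1)" using w1 by (rule geometric_sum)
  thus ?thesis unfolding w_def[symmetric] using wN by simp
qed

lemma one_minus_pow_factor:
  fixes y :: "'b::ring_1"
  shows "(1 - y) * (\<Sum>i<N. y ^ i) = 1 - y ^ N"
proof (induction N)
  case (Suc N)
  have "(1 - y) * (\<Sum>i<Suc N. y ^ i) = (1 - y) * (\<Sum>i<N. y ^ i) + (1 - y) * y ^ N"
    by (simp add: distrib_left)
  also have "\<dots> = 1 - y ^ N + (y ^ N - y ^ Suc N)" unfolding Suc.IH by (simp add: algebra_simps)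
  finally show ?case by simp
qed simp

context cst
begin

lemma rk_local:
  fixes F :: "complex \<Rightarrow> 'a"
  assumes g: "norm g \<le> 1"
    and Fm: "F m * (1 - sc m g) = 1"
    and Fl: "(1 - sc l g) * F l = 1"
    and d: "cmod (l - m) * (norm (F m) + 1) \<le> 1/2"
  shows "norm (F l) \<le> 2 * norm (F m)"
proof -
  define u where "u = sc (l - m) (F m * g)"
  have "norm u = cmod (l - m) * (norm (F m * g))" unfolding u_def by (simp add: norm_sc)
  also have "\<dots> \<le> cmod (l - m) * (norm (F m) * norm g)"
    by (rule mult_left_mono) (auto intro: norm_mult_ineq)
  also have "\<dots> \<le> cmod (l - m) * (norm (F m) + 1)"
    by (rule mult_left_mono) (use g mult_left_le[of "norm g" "norm (F m)"] in auto)
  also have "\<dots> \<le> 1/2" by (rule d)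
  finally have nu: "norm u \<le> 1/2" .
  then obtain w where w: "w * (1 - u) = 1" "norm w \<le> 1 / (1 - norm u)"
    using neumann[of u] by auto
  have nw: "norm w \<le> 2"
  proof -
    have "1 / (1 - norm u) \<le> 2" using nu by (simp add: field_simps)
    thus ?thesis using w(2) by linarith
  qed
  have "F m * (1 - sc l g) = F m * (1 - sc m g) - F m * sc (l - m) g"
    by (simp add: algebra_simps sc_diff_left)
  also have "\<dots> = 1 - u" using Fm by (simp add: u_def sc_mult_right)
  finally have e: "F m * (1 - sc l g) = 1 - u" .
  have "(w * F m) * (1 - sc l g) = 1" using e w(1) by (simp add: mult.assoc)
  hence "w * F m = F l" using Fl by (rule inv_unique)
  hence "norm (F l) \<le> norm w * norm (F m)" by (metis norm_mult_ineq)
  also have "\<dots> \<le> 2 * norm (F m)" by (rule mult_right_mono[OF nw]) simp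
  finally show ?thesis .
qed

lemma rk_bound:
  fixes F :: "complex \<Rightarrow> 'a"
  assumes g: "norm g \<le> 1"
    and Finv: "\<And>l. cmod l \<le> \<rho> \<Longrightarrow> F l * (1 - sc l g) = 1 \<and> (1 - sc l g) * F l = 1"
  shows "\<exists>M. \<forall>l. cmod l \<le> \<rho> \<longrightarrow> norm (F l) \<le> M"
proof -
  define r where "r = (\<lambda>m. 1 / (2 * (norm (F m) + 1)))"
  have rpos: "r m > 0" for m
  proof -
    have "norm (F m) \<ge> 0" by simp
    thus ?thesis unfolding r_def by (simp add: add_nonneg_pos)
  qed
  have "compact (cball (0::complex) \<rho>)" by simp
  then obtain C' where C': "C' \<subseteq> cball 0 \<rho>" "finite C'" "cball 0 \<rho> \<subseteq> (\<Union>m\<in>C'. ball m (r m))"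
  proof (rule compactE_image)
    show "open (ball m (r m))" for m by simp
    show "cball 0 \<rho> \<subseteq> (\<Union>m\<in>cball 0 \<rho>. ball m (r m))" using rpos by force
  qed
  define M where "M = (\<Sum>m\<in>C'. 2 * norm (F m))"
  have "norm (F l) \<le> M" if l: "cmod l \<le> \<rho>" for l
  proof -
    from l C'(3) obtain m where m: "m \<in> C'" "l \<in> ball m (r m)" by (auto simp: dist_norm)
    have mr: "cmod m \<le> \<rho>" using m C'(1) by auto
    have "cmod (l - m) < r m" using m(2) by (simp add: dist_norm norm_minus_commute)
    hence "cmod (l - m) * (norm (F m) + 1) \<le> r m * (norm (F m) + 1)"
      by (intro mult_right_mono) auto
    also have "\<dots> = 1/2"
    proof -
      have "norm (F m) + 1 \<noteq> 0" using norm_ge_zero[of "F m"] by linarith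
      thus ?thesis unfolding r_def by simp
    qed
    finally have d: "cmod (l - m) * (norm (F m) + 1) \<le> 1/2" .
    have "norm (F l) \<le> 2 * norm (F m)"
      using rk_local[of g F m l] g d Finv[OF mr] Finv[OF l] by blast
    also have "\<dots> \<le> M" unfolding M_def by (rule member_le_sum[OF m(1)]) (auto simp: C'(2))
    finally show ?thesis .
  qed
  thus ?thesis by blast
qed

lemma rk_lip:
  fixes F :: "complex \<Rightarrow> 'a"
  assumes Fl: "F l * (1 - sc l g) = 1" and Fm: "(1 - sc m g) * F m = 1"
  shows "F l - F m = sc (l - m) (F l * g * F m)"
proof -
  have "F l - F m = F l * ((1 - sc m g) * F m) - (F l * (1 - sc l g)) * F m"
    using Fl Fm by simp
  also have "\<dots> = F l * ((1 - sc m g) - (1 - sc l g)) * F m" by (simp add: algebra_simps)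
  also have "(1 - sc m g) - (1 - sc l g) = sc (l - m) g" by (simp add: sc_diff_left)
  finally show ?thesis by (simp add: sc_mult_left sc_mult_right mult.assoc)
qed

lemma root_N: "N > 0 \<Longrightarrow> cis (2*pi/N) ^ N = 1"
  by (simp add: Complex.DeMoivre)

lemma root_sum_nat:
  assumes "N > 0" "0 < i" "i < N"
  shows "(\<Sum>j<N. (cis (2*pi/N) ^ j) ^ i) = 0"
proof -
  have "\<not> int N dvd int i" using assms using nat_dvd_not_less[of i N] by simp
  hence "(\<Sum>j<N. (cis (2*pi/N) powi int i) ^ j) = 0" using root_sum assms(1) by blast
  thus ?thesis by (simp add: power_mult[symmetric] mult.commute)
qed

lemma rk_avg:
  fixes F :: "complex \<Rightarrow> 'a"
  assumes N: "N > 0"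
    and Finv: "\<And>j. j < N \<Longrightarrow> F (cis (2*pi/N) ^ j * l) * (1 - sc (cis (2*pi/N) ^ j * l) g) = 1"
  shows "sc (1 / of_nat N) (\<Sum>j<N. F (cis (2*pi/N) ^ j * l)) * (1 - sc (l ^ N) (g ^ N)) = 1"
proof -
  define z where "z = cis (2*pi/N)"
  have zN: "z ^ N = 1" unfolding z_def using N by (rule root_N)
  have one: "F (z ^ j * l) * (1 - sc (l ^ N) (g ^ N)) = (\<Sum>i<N. sc ((z ^ j * l) ^ i) (g ^ i))"
    if j: "j < N" for j
  proof -
    define c where "c = z ^ j * l"
    have cN: "c ^ N = l ^ N" unfolding c_def
      by (simp add: power_mult_distrib power_mult[symmetric] mult.commute[of j N] power_mult zN)
    have "1 - sc (l ^ N) (g ^ N) = 1 - (sc c g) ^ N" by (simp add: sc_pow cN)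
    also have "\<dots> = (1 - sc c g) * (\<Sum>i<N. (sc c g) ^ i)" by (rule one_minus_pow_factor[symmetric])
    finally have "F c * (1 - sc (l ^ N) (g ^ N)) = (F c * (1 - sc c g)) * (\<Sum>i<N. (sc c g) ^ i)"
      by (simp add: mult.assoc)
    also have "\<dots> = (\<Sum>i<N. (sc c g) ^ i)" using Finv[OF j] unfolding c_def z_def by simp
    finally show ?thesis unfolding c_def by (simp add: sc_pow)
  qed
  have "(\<Sum>j<N. F (z ^ j * l)) * (1 - sc (l ^ N) (g ^ N))
      = (\<Sum>j<N. \<Sum>i<N. sc ((z ^ j * l) ^ i) (g ^ i))"
    by (simp add: sum_distrib_right one)
  also have "\<dots> = (\<Sum>i<N. \<Sum>j<N. sc ((z ^ j * l) ^ i) (g ^ i))" by (rule sum.swap)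
  also have "\<dots> = (\<Sum>i<N. sc (l ^ i * (\<Sum>j<N. (z ^ j) ^ i)) (g ^ i))"
    by (simp add: sc_sum_left[symmetric] sum_distrib_left power_mult_distrib mult.commute)
  also have "\<dots> = (\<Sum>i<N. if i = 0 then sc (of_nat N) 1 else 0)"
  proof (rule sum.cong)
    fix i assume "i \<in> {..<N}"
    thus "sc (l ^ i * (\<Sum>j<N. (z ^ j) ^ i)) (g ^ i) = (if i = 0 then sc (of_nat N) 1 else 0)"
      using root_sum_nat[of N i] N unfolding z_def by auto
  qed simp
  also have "\<dots> = sc (of_nat N) 1" using N by simp
  finally have "(\<Sum>j<N. F (z ^ j * l)) * (1 - sc (l ^ N) (g ^ N)) = sc (of_nat N) 1" .
  hence "sc (1 / of_nat N) (\<Sum>j<N. F (z ^ j * l)) * (1 - sc (l ^ N) (g ^ N)) = sc (1 / of_nat N) (sc (of_nat N) 1)"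
    by (simp add: sc_mult_left)
  also have "\<dots> = 1" using N by (simp add: sc_sc)
  finally show ?thesis unfolding z_def .
qed

lemma rickart:
  assumes g: "norm g \<le> 1" and rho: "\<rho> > 1"
    and inv: "\<And>l. cmod l \<le> \<rho> \<Longrightarrow> (\<exists>y. y * (1 - sc l g) = 1 \<and> (1 - sc l g) * y = 1)"
  shows "\<exists>N0. \<forall>N\<ge>N0. norm (g ^ N) < 1"
proof -
  define F where "F l = (SOME y. y * (1 - sc l g) = 1 \<and> (1 - sc l g) * y = 1)" for l
  have Finv: "F l * (1 - sc l g) = 1 \<and> (1 - sc l g) * F l = 1" if "cmod l \<le> \<rho>" for l
    unfolding F_def using someI_ex[OF inv[OF that]] .
  obtain M0 where M0: "\<And>l. cmod l \<le> \<rho> \<Longrightarrow> norm (F l) \<le> M0"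
    using rk_bound[OF g, of \<rho> F] Finv by blast
  define M where "M = max M0 1"
  have M1: "M \<ge> 1" unfolding M_def by simp
  have MF: "cmod l \<le> \<rho> \<Longrightarrow> norm (F l) \<le> M" for l using M0[of l] unfolding M_def by simp
  define e where "e = min ((\<rho> - 1)/2) (1/(8*M^2))"
  have epos: "e > 0" unfolding e_def using rho M1 by simp
  have e8: "e \<le> 1/8"
  proof -
    have "M^2 \<ge> 1" using M1 by simp
    hence "1/(8*M^2) \<le> 1/8" by (intro divide_left_mono) auto
    thus ?thesis unfolding e_def by simp
  qed
  have eM: "2 * e * M^2 \<le> 1/4"
  proof -
    have "M^2 > 0" using M1 by simp
    have "e * M^2 \<le> 1/(8*M^2) * M^2" unfolding e_def using \<open>M^2 > 0\<close>
      by (intro mult_right_mono) auto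
    also have "\<dots> = 1/8" using \<open>M^2 > 0\<close> by simp
    finally show ?thesis by simp
  qed
  define r where "r = 1 - e"
  define r' where "r' = 1 + e"
  have r0: "0 < r" "r < 1" using epos e8 unfolding r_def by auto
  have eb: "e \<le> (\<rho> - 1)/2" unfolding e_def by (rule min.cobounded1)
  have r'1: "r' > 1" "r' \<le> \<rho>" using epos eb unfolding r'_def by auto
  have "\<forall>\<^sub>F n in sequentially. \<bar>r^n\<bar> < 1/5"
    by (rule Archimedean_eventually_pow_inverse) (use r0 in auto)
  then obtain N1 where N1: "\<And>n. n \<ge> N1 \<Longrightarrow> \<bar>r^n\<bar> < 1/5" by (auto simp: eventually_sequentially)
  have "norm (g ^ N) < 1" if N: "N \<ge> max N1 1" for N
  proof -
    have Npos: "N > 0" using N by simp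
    define z where "z = cis (2*pi/N)"
    have nz: "cmod (z ^ j * l) = cmod l" for j l unfolding z_def by (simp add: norm_mult norm_power)
    define \<sigma> where "\<sigma> l = sc (1 / of_nat N) (\<Sum>j<N. F (z ^ j * l))" for l
    have avg: "\<sigma> l * (1 - sc (l ^ N) (g ^ N)) = 1" if l: "cmod l \<le> \<rho>" for l
      unfolding \<sigma>_def z_def by (rule rk_avg[OF Npos]) (use Finv nz l in \<open>auto simp: z_def\<close>)
    have rr: "cmod (complex_of_real r) \<le> \<rho>" "cmod (complex_of_real r') \<le> \<rho>"
      using r0 r'1 rho by auto
    have dterm: "norm (F (z ^ j * r') - F (z ^ j * r)) \<le> 1/4" for j
    proof -
      have a: "cmod (z ^ j * r') \<le> \<rho>" "cmod (z ^ j * r) \<le> \<rho>" using rr nz by auto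
      have "F (z ^ j * r') - F (z ^ j * r) = sc (z ^ j * r' - z ^ j * r) (F (z ^ j * r') * g * F (z ^ j * r))"
        by (rule rk_lip) (use Finv[OF a(1)] Finv[OF a(2)] in auto)
      hence "norm (F (z ^ j * r') - F (z ^ j * r)) = cmod (z ^ j * r' - z ^ j * r) * norm (F (z ^ j * r') * g * F (z ^ j * r))"
        by (simp add: norm_sc)
      also have "cmod (z ^ j * r' - z ^ j * r) = 2 * e"
      proof -
        have "z ^ j * r' - z ^ j * r = z ^ j * complex_of_real (2 * e)" unfolding r_def r'_def
          by (simp add: algebra_simps)
        thus ?thesis using epos by (simp add: norm_mult norm_power z_def)
      qed
      also have "norm (F (z ^ j * r') * g * F (z ^ j * r)) \<le> M * M"
      proof -
        have "norm (F (z ^ j * r') * g * F (z ^ j * r)) \<le> norm (F (z ^ j * r') * g) * norm (F (z ^ j * r))"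
          by (rule norm_mult_ineq)
        also have "\<dots> \<le> norm (F (z ^ j * r')) * norm g * norm (F (z ^ j * r))"
          by (rule mult_right_mono[OF norm_mult_ineq]) simp
        also have "\<dots> \<le> M * 1 * M"
          using MF[OF a(1)] MF[OF a(2)] g M1 by (intro mult_mono) auto
        finally show ?thesis by simp
      qed
      hence "2 * e * norm (F (z ^ j * r') * g * F (z ^ j * r)) \<le> 2 * e * (M * M)"
        using epos by (intro mult_left_mono) auto
      also have "\<dots> \<le> 1/4" using eM by (simp add: power2_eq_square)
      finally show ?thesis .
    qed
    have dsig: "norm (\<sigma> r' - \<sigma> r) \<le> 1/4"
    proof -
      have "\<sigma> r' - \<sigma> r = sc (1 / of_nat N) (\<Sum>j<N. F (z ^ j * r') - F (z ^ j * r))"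
        unfolding \<sigma>_def by (simp add: sc_diff_right sum_subtractf)
      hence "norm (\<sigma> r' - \<sigma> r) = (1 / real N) * norm (\<Sum>j<N. F (z ^ j * r') - F (z ^ j * r))"
        by (simp add: norm_sc norm_divide)
      also have "norm (\<Sum>j<N. F (z ^ j * r') - F (z ^ j * r)) \<le> (\<Sum>j<N. 1/4)"
        by (rule sum_norm_le) (rule dterm)
      also have "(\<Sum>j<(N::nat). (1/4::real)) = real N / 4" by simp
      finally show ?thesis using Npos by (simp add: field_simps)
    qed
    define u where "u = sc (complex_of_real (r ^ N)) (g ^ N)"
    have ngN: "norm (g ^ N) \<le> 1" using norm_power_ineq[of g N] power_le_one[of "norm g" N] g by simp
    have nu: "norm u \<le> 1/5"
    proof -
      have "norm u = \<bar>r ^ N\<bar> * norm (g ^ N)" unfolding u_def norm_sc norm_of_real ..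
      also have "\<dots> \<le> \<bar>r ^ N\<bar> * 1" by (rule mult_left_mono[OF ngN]) simp
      finally show ?thesis using N1[of N] N by simp
    qed
    obtain w where w: "(1 - u) * w = 1" "norm (w - 1) \<le> norm u / (1 - norm u)"
      using neumann[of u] nu by auto
    have "\<sigma> r = w"
      by (rule inv_unique[OF _ w(1)]) (use avg[OF rr(1)] in \<open>simp add: u_def\<close>)
    moreover have "norm u / (1 - norm u) \<le> 1/4" using nu norm_ge_zero[of u] by (simp add: field_simps)
    ultimately have s1: "norm (\<sigma> r - 1) \<le> 1/4" using w(2) by (metis order_trans)
    have s2: "norm (\<sigma> r' - 1) \<le> 1/2"
    proof -
      have "norm (\<sigma> r' - 1) \<le> norm (\<sigma> r' - \<sigma> r) + norm (\<sigma> r - 1)"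
        by (metis diff_add_cancel norm_triangle_ineq add_diff_eq)
      thus ?thesis using dsig s1 by simp
    qed
    define ee where "ee = \<sigma> r' - 1"
    have ne2: "norm (- ee) \<le> 1/2" using s2 unfolding ee_def by (simp add: norm_minus_commute)
    hence ne: "norm (- ee) < 1" by simp
    obtain w' where w'1: "w' * (1 - (- ee)) = 1" and w'2: "norm (w' - 1) \<le> norm (- ee) / (1 - norm (- ee))"
      using neumann[OF ne] by auto
    define u' where "u' = sc (complex_of_real (r' ^ N)) (g ^ N)"
    have e1: "(1 - (- ee)) * (1 - u') = 1" using avg[OF rr(2)] unfolding ee_def u'_def by simp
    have "w' = 1 - u'" by (rule inv_unique[OF w'1 e1])
    hence "u' = 1 - w'" by simp
    hence "norm u' \<le> norm (- ee) / (1 - norm (- ee))" using w'2 by (simp add: norm_minus_commute)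
    also have "\<dots> \<le> 1"
    proof -
      have "0 < 1 - norm (- ee)" "norm (- ee) \<le> 1 - norm (- ee)" using ne2 by auto
      thus ?thesis by (simp add: divide_le_eq_1_pos)
    qed
    finally have "norm u' \<le> 1" .
    hence "r' ^ N * norm (g ^ N) \<le> 1" unfolding u'_def norm_sc norm_of_real using r'1 by simp
    moreover have "r' ^ N > 1" using r'1 Npos by simp
    ultimately show "norm (g ^ N) < 1"
    proof -
      assume a: "r' ^ N * norm (g ^ N) \<le> 1" "r' ^ N > 1"
      show ?thesis
      proof (rule ccontr)
        assume "\<not> norm (g ^ N) < 1"
        hence "r' ^ N * 1 \<le> r' ^ N * norm (g ^ N)" using a(2) by (intro mult_left_mono) auto
        thus False using a by linarith
      qed
    qed
  qed
  thus ?thesis by blast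
qed

end



definition inv_el :: "'b::ring_1 \<Rightarrow> bool" where
  "inv_el x \<longleftrightarrow> (\<exists>y. y * x = 1 \<and> x * y = 1)"

lemma inv_el_mult: "inv_el a \<Longrightarrow> inv_el b \<Longrightarrow> inv_el (a * b)"
  unfolding inv_el_def
proof (elim exE conjE)
  fix x y assume a: "x * a = 1" "a * x = 1" and b: "y * b = 1" "b * y = 1"
  have "(y * x) * (a * b) = y * (x * a) * b" by (simp add: mult.assoc)
  moreover have "(a * b) * (y * x) = a * (b * y) * x" by (simp add: mult.assoc)
  ultimately show "\<exists>z. z * (a * b) = 1 \<and> a * b * z = 1" using a b by auto
qed

context cst
begin

lemma inv_el_sc: "c \<noteq> 0 \<Longrightarrow> inv_el x \<Longrightarrow> inv_el (sc c x)"
  unfolding inv_el_def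
proof (elim exE conjE)
  fix y assume c: "c \<noteq> 0" and y: "y * x = 1" "x * y = 1"
  have "sc (inverse c) y * sc c x = 1" "sc c x * sc (inverse c) y = 1"
    using y c by (simp_all add: sc_mult_left sc_mult_right sc_sc)
  thus "\<exists>z. z * sc c x = 1 \<and> sc c x * z = 1" by blast
qed

lemma inv_el_neumann: "norm (u::'a) < 1 \<Longrightarrow> inv_el (1 - u)"
  unfolding inv_el_def using neumann[of u] by blast

lemma spec_bound:
  assumes "cmod m > norm M" shows "inv_el (M - sc m 1)"
proof -
  have m0: "m \<noteq> 0" using assms by auto
  have "norm (sc (1/m) M) = norm M / cmod m" by (simp add: norm_sc norm_divide)
  also have "\<dots> < 1" using assms m0 by (simp add: field_simps)
  finally have "inv_el (1 - sc (1/m) M)" by (rule inv_el_neumann)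
  hence "inv_el (sc (- m) (1 - sc (1/m) M))" using m0 by (intro inv_el_sc) auto
  also have "sc (- m) (1 - sc (1/m) M) = M - sc m 1"
    using m0 by (simp add: sc_diff_right sc_sc sc_minus_left)
  finally show ?thesis .
qed

lemma spectral_point:
  assumes sa: "st h = h" and h0: "h \<noteq> 0" and rho: "\<rho> > 1"
  shows "\<exists>l. cmod l \<le> \<rho> / norm h \<and> \<not> inv_el (1 - sc l h)"
proof (rule ccontr)
  assume A: "\<not> ?thesis"
  define g where "g = sc (complex_of_real (1 / norm h)) h"
  have ng: "norm g = 1" unfolding g_def using h0 by (simp add: norm_sc norm_divide)
  have sg: "st g = g" unfolding g_def by (simp add: st_sc sa)
  have "\<exists>N0. \<forall>N\<ge>N0. norm (g ^ N) < 1"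
  proof (rule rickart[of g \<rho>])
    show "norm g \<le> 1" using ng by simp
    show "1 < \<rho>" by (rule rho)
    fix l :: complex assume l: "cmod l \<le> \<rho>"
    have "cmod (l * complex_of_real (1 / norm h)) \<le> \<rho> / norm h"
      using l h0 by (simp add: norm_divide divide_right_mono)
    hence "inv_el (1 - sc (l * complex_of_real (1 / norm h)) h)" using A by blast
    thus "\<exists>y. y * (1 - sc l g) = 1 \<and> (1 - sc l g) * y = 1"
      unfolding inv_el_def g_def by (simp add: sc_sc)
  qed
  then obtain N0 where N0: "\<And>N. N \<ge> N0 \<Longrightarrow> norm (g ^ N) < 1" by blast
  have "N0 \<le> 2 ^ N0" by (rule less_imp_le[OF less_exp])
  hence "norm (g ^ (2 ^ N0)) < 1" by (rule N0)
  moreover have "norm (g ^ (2 ^ N0)) = 1" using norm_selfadj_pow2[OF sg, of N0] ng by simp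
  ultimately show False by simp
qed

lemma hom_basic:
  assumes f: "star_hom sc st f"
  shows "f (x + y) = f x + f y" "f (x * y) = f x * f y" "f (sc c x) = sc c (f x)"
    "f (st x) = st (f x)" "f 1 = 1" "f 0 = 0" "f (- x) = - f x" "f (x - y) = f x - f y"
proof -
  show a: "f (x + y) = f x + f y" for x y using f unfolding star_hom_def by blast
  show "f (x * y) = f x * f y" using f unfolding star_hom_def by blast
  show "f (sc c x) = sc c (f x)" using f unfolding star_hom_def by blast
  show "f (st x) = st (f x)" using f unfolding star_hom_def by blast
  show "f 1 = 1" using f unfolding star_hom_def by blast
  show z: "f 0 = 0" using a[of 0 0] by simp
  show m: "f (- x) = - f x" for x using a[of x "-x"] z minus_unique[of "f x" "f (-x)"] by simp
  show "f (x - y) = f x - f y" using a[of x "-y"] m[of y] by simp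
qed

lemma hom_contr_sa:
  assumes f: "star_hom sc st f" and sa: "st h = h"
  shows "norm (f h) \<le> norm h"
proof (rule ccontr)
  assume "\<not> ?thesis"
  hence lt: "norm h < norm (f h)" by simp
  define g where "g = f h"
  have g0: "g \<noteq> 0" using lt g_def by auto
  have sg: "st g = g" unfolding g_def using hom_basic(4)[OF f, of h] sa by simp
  define r where "r = 2 / (norm h + norm g)"
  have den: "norm h + norm g > 0" using g0 by (simp add: add_nonneg_pos)
  have r1: "r * norm h < 1" unfolding r_def using lt den g_def by (simp add: field_simps)
  have r2: "r * norm g > 1" unfolding r_def using lt den g_def by (simp add: field_simps)
  obtain l where l: "cmod l \<le> r * norm g / norm g" "\<not> inv_el (1 - sc l g)"
    using spectral_point[OF sg g0 r2] by blast
  have lr: "cmod l \<le> r" using l(1) g0 by simp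
  have "norm (sc l h) < 1"
  proof -
    have "norm (sc l h) = cmod l * norm h" by (simp add: norm_sc)
    also have "\<dots> \<le> r * norm h" by (rule mult_right_mono[OF lr]) simp
    finally show ?thesis using r1 by simp
  qed
  hence "inv_el (1 - sc l h)" by (rule inv_el_neumann)
  then obtain y where y: "y * (1 - sc l h) = 1" "(1 - sc l h) * y = 1" unfolding inv_el_def by blast
  have "f y * (1 - sc l g) = 1" "(1 - sc l g) * f y = 1"
    using arg_cong[OF y(1), of f] arg_cong[OF y(2), of f] unfolding g_def
    by (simp_all add: hom_basic[OF f])
  hence "inv_el (1 - sc l g)" unfolding inv_el_def by blast
  thus False using l(2) by simp
qed

lemma hom_contr:
  assumes f: "star_hom sc st f"
  shows "norm (f a) \<le> norm a"
proof -
  have "(norm (f a))\<^sup>2 = norm (st (f a) * f a)" by (simp add: cstar_id)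
  also have "st (f a) * f a = f (st a * a)" by (simp add: hom_basic[OF f])
  also have "norm (f (st a * a)) \<le> norm (st a * a)" by (rule hom_contr_sa[OF f]) (simp add: st_mult)
  also have "\<dots> = (norm a)\<^sup>2" by (simp add: cstar_id)
  finally show ?thesis by (rule power2_le_imp_le) simp
qed

lemma hom_lip:
  assumes f: "star_hom sc st f"
  shows "norm (f a - f b) \<le> norm (a - b)"
  using hom_contr[OF f, of "a - b"] hom_basic(8)[OF f] by simp

definition proj :: "'a \<Rightarrow> bool" where "proj p \<longleftrightarrow> st p = p \<and> p * p = p"

lemma proj_norm: assumes "proj p" shows "norm p \<le> 1"
proof -
  have "(norm p)\<^sup>2 = norm p" using cstar_id[of p] assms unfolding proj_def by simp
  hence "norm p * norm p = norm p * 1" by (simp add: power2_eq_square)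
  thus ?thesis by (cases "norm p = 0") auto
qed

lemma proj_compl: "proj p \<Longrightarrow> proj (1 - p)"
  unfolding proj_def by (simp add: st_diff algebra_simps)

lemma transfer:
  assumes e: "proj e" and eh: "e * h = h" "h * e = h" and s: "s \<noteq> 0" and sg: "\<sigma> \<noteq> 0"
    and inv: "inv_el (e + sc s h - sc (1 + s * \<sigma>) 1)"
  shows "inv_el (h - sc \<sigma> 1)"
proof -
  define M where "M = e + sc s h - sc (1 + s * \<sigma>) 1"
  obtain W where W: "W * M = 1" "M * W = 1" using inv unfolding inv_el_def M_def by blast
  have ee: "e * e = e" using e unfolding proj_def by simp
  have eM: "e * M = M * e" unfolding M_def
    by (simp add: algebra_simps ee eh sc_mult_left sc_mult_right)
  have hM: "h * M = M * h" unfolding M_def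
    by (simp add: algebra_simps eh sc_mult_left sc_mult_right)
  have eW: "e * W = W * e" by (rule inv_commute[OF W eM])
  have hW: "h * W = W * h" by (rule inv_commute[OF W hM])
  define H where "H = h - sc \<sigma> 1"
  define Z where "Z = sc s (W * e) - sc (1 / \<sigma>) (1 - e)"
  have Me: "M * e = sc s (H * e)" unfolding M_def H_def
    by (simp add: algebra_simps ee eh sc_mult_left sc_mult_right sc_diff_right sc_add_left sc_sc)
  have H1e: "H * (1 - e) = - sc \<sigma> (1 - e)" unfolding H_def
    by (simp add: algebra_simps eh sc_mult_left sc_mult_right sc_diff_right)
  have "H * (sc s (W * e)) = sc s (H * e * W)" by (simp add: sc_mult_right mult.assoc eW)
  also have "sc s (H * e * W) = M * e * W" using Me by (simp add: sc_mult_left)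
  also have "M * e * W = e" using W(2) eW by (metis mult.assoc mult_1_left)
  finally have A: "H * (sc s (W * e)) = e" .
  have B: "H * sc (1 / \<sigma>) (1 - e) = - (1 - e)"
    using H1e sg by (simp add: sc_mult_right sc_minus_right sc_sc)
  have HZ: "H * Z = 1" unfolding Z_def using A B by (simp add: right_diff_distrib)
  have c1: "(W * e) * h = h * (W * e)"
  proof -
    have "(W * e) * h = W * h" by (simp add: mult.assoc eh)
    also have "\<dots> = h * W" by (simp add: hW)
    also have "\<dots> = h * (W * e)" using eW eh
      by (metis mult.assoc)
    finally show ?thesis .
  qed
  have c2: "(1 - e) * h = h * (1 - e)" by (simp add: algebra_simps eh)
  have Zh: "Z * h = h * Z" unfolding Z_def
    by (simp add: left_diff_distrib right_diff_distrib sc_mult_left sc_mult_right c1 c2 eh)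
  have comm: "Z * H = H * Z" unfolding H_def
    by (simp add: left_diff_distrib right_diff_distrib Zh sc_mult_left sc_mult_right)
  show ?thesis unfolding inv_el_def H_def[symmetric] using HZ comm by auto
qed

lemma cplx_pm: fixes x :: complex assumes "cmod (1 + x) \<le> 1" "cmod (1 - x) \<le> 1" shows "x = 0"
proof -
  have a: "(cmod (1 + x))\<^sup>2 \<le> 1" "(cmod (1 - x))\<^sup>2 \<le> 1"
    using assms by (auto simp: power_le_one)
  hence "(1 + Re x)\<^sup>2 + (Im x)\<^sup>2 \<le> 1" "(1 - Re x)\<^sup>2 + (Im x)\<^sup>2 \<le> 1"
    by (simp_all add: cmod_power2)
  hence "(Re x)\<^sup>2 + (Im x)\<^sup>2 \<le> 0" by (simp add: power2_eq_square algebra_simps)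
  hence "(Re x)\<^sup>2 = 0" "(Im x)\<^sup>2 = 0"
    using zero_le_power2[of "Re x"] zero_le_power2[of "Im x"] by linarith+
  thus ?thesis by (simp add: complex_eq_iff)
qed

lemma sa_pm:
  assumes e: "proj e" and eh: "e * h = h" "h * e = h" and sa: "st h = h" and t: "t > 0"
    and n1: "norm (e + sc (complex_of_real t) h) \<le> 1" and n2: "norm (e - sc (complex_of_real t) h) \<le> 1"
  shows "h = 0"
proof (rule ccontr)
  assume h0: "h \<noteq> 0"
  obtain l where l: "\<not> inv_el (1 - sc l h)"
    using spectral_point[OF sa h0, of 2] by auto
  have l0: "l \<noteq> 0"
  proof
    assume "l = 0"
    hence "inv_el (1 - sc l h)" unfolding inv_el_def by (auto intro: exI[of _ 1])
    thus False using l by simp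
  qed
  define \<sigma> where "\<sigma> = 1 / l"
  have sg: "\<sigma> \<noteq> 0" using l0 unfolding \<sigma>_def by simp
  have key: "cmod (1 + s * \<sigma>) \<le> 1" if s0: "s \<noteq> 0" and nM: "norm (e + sc s h) \<le> 1" for s
  proof (rule ccontr)
    assume "\<not> ?thesis"
    hence "cmod (1 + s * \<sigma>) > norm (e + sc s h)" using nM by simp
    hence "inv_el (e + sc s h - sc (1 + s * \<sigma>) 1)" by (rule spec_bound)
    hence "inv_el (h - sc \<sigma> 1)" by (rule transfer[OF e eh s0 sg])
    hence "inv_el (sc (- l) (h - sc \<sigma> 1))" using l0 by (intro inv_el_sc) auto
    also have "sc (- l) (h - sc \<sigma> 1) = 1 - sc l h"
      using l0 unfolding \<sigma>_def by (simp add: sc_diff_right sc_sc sc_minus_left)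
    finally show False using l by simp
  qed
  have k1: "cmod (1 + complex_of_real t * \<sigma>) \<le> 1" by (rule key) (use t n1 in auto)
  have k2: "cmod (1 + (- complex_of_real t) * \<sigma>) \<le> 1"
    by (rule key) (use t n2 in \<open>auto simp: sc_minus_left\<close>)
  have "complex_of_real t * \<sigma> = 0" by (rule cplx_pm) (use k1 k2 in auto)
  thus False using t sg by simp
qed

lemma norm3: "norm ((a::'a) * b * c) \<le> norm a * norm b * norm c"
proof -
  have "norm (a * b * c) \<le> norm (a * b) * norm c" by (rule norm_mult_ineq)
  also have "\<dots> \<le> norm a * norm b * norm c" by (rule mult_right_mono[OF norm_mult_ineq]) simp
  finally show ?thesis .
qed

lemma proj_orth:
  assumes e: "proj e" and f: "proj f" and K: "finite K" and P: "\<And>k. k \<in> K \<Longrightarrow> proj (P k)"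
    and sum1: "e + f + (\<Sum>k\<in>K. P k) = 1"
  shows "f * e = 0"
proof -
  define q where "q = (\<Sum>k\<in>K. P k)"
  define h where "h = e * f * e"
  have ee: "e * e = e" and se: "st e = e" using e unfolding proj_def by auto
  have ff: "f * f = f" and sf: "st f = f" using f unfolding proj_def by auto
  have sa: "st h = h" unfolding h_def by (simp add: st_mult se sf mult.assoc)
  have eh: "e * h = h" "h * e = h" unfolding h_def by (simp_all add: mult.assoc[symmetric] ee)
    (simp add: mult.assoc ee)
  define t where "t = 1 / (real (card K) + 1)"
  have t0: "t > 0" and t1: "t \<le> 1" and tK: "t * card K \<le> 1" unfolding t_def by (auto simp: field_simps)
  have ne: "norm e \<le> 1" by (rule proj_norm[OF e])
  have nf: "norm (1 - sc (complex_of_real t) f) \<le> 1"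
  proof -
    have "1 - sc (complex_of_real t) f = sc (complex_of_real (1 - t)) 1 + sc (complex_of_real t) (1 - f)"
      by (simp add: sc_diff_right sc_diff_left[symmetric] sc_add_left[symmetric])
    hence "norm (1 - sc (complex_of_real t) f) \<le> (1 - t) * 1 + t * norm (1 - f)"
      using t0 t1 by (metis norm_sc norm_one norm_of_real abs_of_nonneg less_imp_le diff_ge_0_iff_ge norm_triangle_ineq)
    also have "\<dots> \<le> (1 - t) + t * 1" using mult_left_le[OF proj_norm[OF proj_compl[OF f]], of t] t0 by simp
    finally show ?thesis by simp
  qed
  have q1: "e * q * e = - h"
  proof -
    have "e * (e + f + q) * e = e" using sum1 ee unfolding q_def by simp
    moreover have "e * (e + f + q) * e = e * e * e + e * f * e + e * q * e"
      by (simp add: distrib_left distrib_right)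
    ultimately have "e + h + e * q * e = e" unfolding h_def by (simp add: ee)
    hence "h + e * q * e = 0" by simp
    thus ?thesis by (metis add.commute minus_unique)
  qed
  have nq: "norm (1 - sc (complex_of_real t) q) \<le> 1"
  proof -
    have eqn: "1 - sc (complex_of_real t) q = sc (complex_of_real (1 - t * card K)) 1 + (\<Sum>k\<in>K. sc (complex_of_real t) (1 - P k))"
      unfolding q_def
      by (simp add: sc_sum_right[symmetric] sum_subtractf sc_diff_right sc_diff_left sc_of_nat[symmetric] sc_sc mult.commute)
    have nA: "norm (sc (complex_of_real (1 - t * card K)) (1::'a)) = 1 - t * card K"
      using tK unfolding norm_sc norm_of_real by simp
    have nB: "norm (\<Sum>k\<in>K. sc (complex_of_real t) (1 - P k)) \<le> (\<Sum>k\<in>K. t * 1)"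
    proof (rule sum_norm_le)
      fix k assume "k \<in> K"
      thus "norm (sc (complex_of_real t) (1 - P k)) \<le> t * 1"
        using proj_norm[OF proj_compl[OF P]] t0 by (simp add: norm_sc)
    qed
    have "norm (1 - sc (complex_of_real t) q) \<le> norm (sc (complex_of_real (1 - t * card K)) (1::'a)) + norm (\<Sum>k\<in>K. sc (complex_of_real t) (1 - P k))"
      unfolding eqn by (rule norm_triangle_ineq)
    also have "\<dots> \<le> (1 - t * card K) + (\<Sum>k\<in>K. t * 1)" using nA nB by linarith
    finally show ?thesis by simp
  qed
  have em: "norm (e - sc (complex_of_real t) h) \<le> 1"
  proof -
    have "e - sc (complex_of_real t) h = e * (1 - sc (complex_of_real t) f) * e"
      unfolding h_def by (simp add: algebra_simps ee sc_mult_left sc_mult_right)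
    also have "norm \<dots> \<le> norm e * norm (1 - sc (complex_of_real t) f) * norm e"
      by (rule norm3)
    also have "\<dots> \<le> 1 * 1 * 1" using ne nf by (intro mult_mono) auto
    finally show ?thesis by simp
  qed
  have ep: "norm (e + sc (complex_of_real t) h) \<le> 1"
  proof -
    have "e + sc (complex_of_real t) h = e * (1 - sc (complex_of_real t) q) * e"
      using q1 by (simp add: algebra_simps ee sc_mult_left sc_mult_right sc_minus_right)
    also have "norm \<dots> \<le> norm e * norm (1 - sc (complex_of_real t) q) * norm e"
      by (rule norm3)
    also have "\<dots> \<le> 1 * 1 * 1" using ne nq by (intro mult_mono) auto
    finally show ?thesis by simp
  qed
  have h0: "h = 0" by (rule sa_pm[OF e eh sa t0 ep em])
  have "(norm (f * e))\<^sup>2 = norm (st (f * e) * (f * e))" by (simp add: cstar_id)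
  also have "st (f * e) * (f * e) = h" unfolding h_def
    by (simp add: st_mult se sf mult.assoc) (simp add: mult.assoc[symmetric] ff)
  finally show ?thesis using h0 by simp
qed

end



locale cuntz = cst sc st for sc :: "complex \<Rightarrow> 'a::{real_normed_algebra_1,banach} \<Rightarrow> 'a" and st +
  fixes s :: "nat \<Rightarrow> 'a" and n :: nat
  assumes n2: "n \<ge> 2"
    and isom: "\<forall>i<n. st (s i) * s i = 1"
    and cuntzrel: "(\<Sum>i<n. s i * st (s i)) = 1"
begin

definition sw :: "nat list \<Rightarrow> 'a" where "sw \<mu> = foldr (\<lambda>i a. s i * a) \<mu> 1"

lemma sw_Nil[simp]: "sw [] = 1" by (simp add: sw_def)
lemma sw_Cons[simp]: "sw (i # \<mu>) = s i * sw \<mu>" by (simp add: sw_def)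
lemma sw_append: "sw (\<mu> @ \<nu>) = sw \<mu> * sw \<nu>"
  by (induction \<mu>) (auto simp: mult.assoc)

definition Wd :: "nat \<Rightarrow> nat list set" where
  "Wd l = {xs. set xs \<subseteq> {..<n} \<and> length xs = l}"

lemma Wd_finite[simp]: "finite (Wd l)" unfolding Wd_def by (rule finite_lists_length_eq) simp
lemma Wd_card: "card (Wd l) = n ^ l" unfolding Wd_def by (subst card_lists_length_eq) auto

lemma Wd_Suc_sum: "(\<Sum>\<mu>\<in>Wd (Suc l). f \<mu>) = (\<Sum>i<n. \<Sum>\<mu>\<in>Wd l. f (i # \<mu>))"
proof -
  have eq: "Wd (Suc l) = (\<lambda>(xs, i). i # xs) ` (Wd l \<times> {..<n})"
    unfolding Wd_def by (rule lists_length_Suc_eq)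
  have inj: "inj_on (\<lambda>(xs, i). i # xs) (Wd l \<times> {..<n})" by (auto simp: inj_on_def)
  have "(\<Sum>\<mu>\<in>Wd (Suc l). f \<mu>) = (\<Sum>p\<in>Wd l \<times> {..<n}. f (snd p # fst p))"
    unfolding eq by (subst sum.reindex[OF inj]) (simp add: case_prod_beta)
  also have "\<dots> = (\<Sum>(xs, i)\<in>Wd l \<times> {..<n}. f (i # xs))" by (simp add: case_prod_beta)
  also have "\<dots> = (\<Sum>\<mu>\<in>Wd l. \<Sum>i<n. f (i # \<mu>))" by (rule sum.cartesian_product[symmetric])
  also have "\<dots> = (\<Sum>i<n. \<Sum>\<mu>\<in>Wd l. f (i # \<mu>))" by (rule sum.swap)
  finally show ?thesis .
qed

lemma Wd_Cons: "i # \<mu> \<in> Wd (Suc l) \<longleftrightarrow> i < n \<and> \<mu> \<in> Wd l" unfolding Wd_def by auto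
lemma Wd_append: "\<mu> \<in> Wd a \<Longrightarrow> \<nu> \<in> Wd b \<Longrightarrow> \<mu> @ \<nu> \<in> Wd (a + b)" unfolding Wd_def by auto

lemma proj_ss: "i < n \<Longrightarrow> proj (s i * st (s i))"
  unfolding proj_def using isom by (simp add: st_mult mult.assoc) (simp add: mult.assoc[symmetric])

lemma orth: assumes "i < n" "j < n" "i \<noteq> j" shows "st (s i) * s j = 0"
proof -
  define P where "P k = s k * st (s k)" for k
  define K where "K = {..<n} - {i, j}"
  have "(\<Sum>k<n. P k) = P j + (\<Sum>k\<in>{..<n} - {j}. P k)" by (rule sum.remove) (use assms in auto)
  also have "(\<Sum>k\<in>{..<n} - {j}. P k) = P i + (\<Sum>k\<in>{..<n} - {j} - {i}. P k)"
    by (rule sum.remove) (use assms in auto)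
  also have "{..<n} - {j} - {i} = K" unfolding K_def by auto
  finally have "P j + P i + (\<Sum>k\<in>K. P k) = 1" using cuntzrel unfolding P_def by (simp add: add.assoc)
  hence "P i * P j = 0"
    by (intro proj_orth[of "P j" "P i" K P]) (use assms in \<open>auto simp: P_def K_def intro: proj_ss\<close>)
  hence "st (s i) * (P i * P j) * s j = 0" by simp
  moreover have "st (s i) * (P i * P j) * s j = st (s i) * s j"
    unfolding P_def using isom assms by (simp add: mult.assoc) (simp add: mult.assoc[symmetric])
  ultimately show ?thesis by simp
qed

lemma ss: "i < n \<Longrightarrow> j < n \<Longrightarrow> st (s i) * s j = (if i = j then 1 else 0)"
  using orth isom by auto

lemma word_prod:
  assumes "set \<nu> \<subseteq> {..<n}" "set \<alpha> \<subseteq> {..<n}"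
  shows "st (sw \<nu>) * sw \<alpha> = (if \<exists>r. \<alpha> = \<nu> @ r then sw (drop (length \<nu>) \<alpha>)
          else if \<exists>r. \<nu> = \<alpha> @ r then st (sw (drop (length \<alpha>) \<nu>)) else 0)"
  using assms
proof (induction \<nu> arbitrary: \<alpha>)
  case Nil thus ?case by simp
next
  case (Cons i \<nu>)
  show ?case
  proof (cases \<alpha>)
    case Nil thus ?thesis by simp
  next
    case (Cons j \<alpha>')
    have ij: "i < n" "j < n" using Cons.prems \<open>\<alpha> = j # \<alpha>'\<close> by auto
    have "st (sw (i # \<nu>)) * sw \<alpha> = st (sw \<nu>) * (st (s i) * s j) * sw \<alpha>'"
      using Cons by (simp add: st_mult mult.assoc)
    also have "\<dots> = (if i = j then st (sw \<nu>) * sw \<alpha>' else 0)" using ss[OF ij] by simp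
    finally have L: "st (sw (i # \<nu>)) * sw \<alpha> = (if i = j then st (sw \<nu>) * sw \<alpha>' else 0)" .
    have e1: "(\<exists>r. \<alpha> = (i # \<nu>) @ r) \<longleftrightarrow> i = j \<and> (\<exists>r. \<alpha>' = \<nu> @ r)"
      using \<open>\<alpha> = j # \<alpha>'\<close> by auto
    have e2: "(\<exists>r. i # \<nu> = \<alpha> @ r) \<longleftrightarrow> i = j \<and> (\<exists>r. \<nu> = \<alpha>' @ r)"
      using \<open>\<alpha> = j # \<alpha>'\<close> by auto
    have IH: "st (sw \<nu>) * sw \<alpha>' = (if \<exists>r. \<alpha>' = \<nu> @ r then sw (drop (length \<nu>) \<alpha>')
          else if \<exists>r. \<nu> = \<alpha>' @ r then st (sw (drop (length \<alpha>') \<nu>)) else 0)"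
      using Cons.IH[of \<alpha>'] Cons.prems \<open>\<alpha> = j # \<alpha>'\<close> by simp
    show ?thesis
    proof (cases "i = j")
      case True
      have d1: "drop (length (i # \<nu>)) \<alpha> = drop (length \<nu>) \<alpha>'" using \<open>\<alpha> = j # \<alpha>'\<close> by simp
      have d2: "drop (length \<alpha>) (i # \<nu>) = drop (length \<alpha>') \<nu>" using \<open>\<alpha> = j # \<alpha>'\<close> True by simp
      have L1: "st (sw (i # \<nu>)) * sw \<alpha> = st (sw \<nu>) * sw \<alpha>'" using L True by simp
      have E1: "(\<exists>r. \<alpha> = (i # \<nu>) @ r) = (\<exists>r. \<alpha>' = \<nu> @ r)" using e1 True by simp
      have E2: "(\<exists>r. i # \<nu> = \<alpha> @ r) = (\<exists>r. \<nu> = \<alpha>' @ r)" using e2 True by simp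
      show ?thesis by (simp only: L1 E1 E2 IH d1 d2)
    next
      case False
      thus ?thesis by (simp only: L e1 e2 simp_thms if_False)
    qed
  qed
qed

lemma sw_isom: "set \<mu> \<subseteq> {..<n} \<Longrightarrow> st (sw \<mu>) * sw \<mu> = 1"
  using word_prod[of \<mu> \<mu>] by simp

lemma sw_orth: "\<mu> \<in> Wd l \<Longrightarrow> \<nu> \<in> Wd l \<Longrightarrow> st (sw \<mu>) * sw \<nu> = (if \<mu> = \<nu> then 1 else 0)"
proof -
  assume a: "\<mu> \<in> Wd l" "\<nu> \<in> Wd l"
  have len: "length \<mu> = length \<nu>" using a unfolding Wd_def by simp
  have e1: "(\<exists>r. \<nu> = \<mu> @ r) \<longleftrightarrow> \<mu> = \<nu>" using len by auto
  have e2: "(\<exists>r. \<mu> = \<nu> @ r) \<longleftrightarrow> \<mu> = \<nu>" using len by auto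
  show ?thesis using word_prod[of \<mu> \<nu>] a unfolding Wd_def e1 e2 by simp
qed

lemma norm_sw: "set \<mu> \<subseteq> {..<n} \<Longrightarrow> norm (sw \<mu>) = 1"
proof -
  assume a: "set \<mu> \<subseteq> {..<n}"
  have "(norm (sw \<mu>))\<^sup>2 = 1" using cstar_id[of "sw \<mu>"] sw_isom[OF a] by simp
  hence "norm (sw \<mu>) = 1 \<or> norm (sw \<mu>) = - 1" by (simp add: power2_eq_1_iff)
  thus ?thesis using norm_ge_zero[of "sw \<mu>"] by linarith
qed

lemma norm_sw_Wd: "\<mu> \<in> Wd l \<Longrightarrow> norm (sw \<mu>) = 1" unfolding Wd_def by (auto intro: norm_sw)

lemma sum_proj: "(\<Sum>\<mu>\<in>Wd l. sw \<mu> * st (sw \<mu>)) = 1"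
proof (induction l)
  case 0
  have "Wd 0 = {[]}" unfolding Wd_def by auto
  thus ?case by simp
next
  case (Suc l)
  have "(\<Sum>\<mu>\<in>Wd (Suc l). sw \<mu> * st (sw \<mu>)) = (\<Sum>i<n. \<Sum>\<mu>\<in>Wd l. s i * (sw \<mu> * st (sw \<mu>)) * st (s i))"
    by (simp add: Wd_Suc_sum st_mult mult.assoc)
  also have "\<dots> = (\<Sum>i<n. s i * (\<Sum>\<mu>\<in>Wd l. sw \<mu> * st (sw \<mu>)) * st (s i))"
    by (simp add: sum_distrib_left sum_distrib_right)
  also have "\<dots> = 1" using Suc cuntzrel by simp
  finally show ?case .
qed

end



context cuntz
begin

lemma sc_mult_both: "sc a x * sc b y = sc (a * b) (x * y)"
  by (simp add: sc_mult_left sc_mult_right sc_sc mult.commute)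

lemma cnj_mult_self: "cnj c * c = complex_of_real ((cmod c)\<^sup>2)"
  using complex_norm_square[of c] by (simp add: mult.commute)

lemma sc1_inj: "sc c 1 = sc d 1 \<Longrightarrow> c = d"
proof -
  assume "sc c 1 = sc d 1"
  hence "sc (c - d) (1::'a) = 0" by (simp add: sc_diff_left)
  hence "norm (sc (c - d) (1::'a)) = 0" by simp
  thus "c = d" by (simp add: norm_sc)
qed

definition V :: "nat \<Rightarrow> 'a set" where
  "V L = {x. \<exists>a. x = (\<Sum>\<mu>\<in>Wd L. sc (a \<mu>) (sw \<mu>))}"

lemma V_zero[simp]: "0 \<in> V L" unfolding V_def by (auto intro: exI[of _ "\<lambda>_. 0"])

lemma V_add: "v \<in> V L \<Longrightarrow> w \<in> V L \<Longrightarrow> v + w \<in> V L"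
  unfolding V_def
proof (elim CollectE exE, intro CollectI)
  fix a b assume "v = (\<Sum>\<mu>\<in>Wd L. sc (a \<mu>) (sw \<mu>))" "w = (\<Sum>\<mu>\<in>Wd L. sc (b \<mu>) (sw \<mu>))"
  thus "\<exists>c. v + w = (\<Sum>\<mu>\<in>Wd L. sc (c \<mu>) (sw \<mu>))"
    by (intro exI[of _ "\<lambda>\<mu>. a \<mu> + b \<mu>"]) (simp add: sc_add_left sum.distrib)
qed

lemma V_sc: "v \<in> V L \<Longrightarrow> sc c v \<in> V L"
  unfolding V_def
proof (elim CollectE exE, intro CollectI)
  fix a assume "v = (\<Sum>\<mu>\<in>Wd L. sc (a \<mu>) (sw \<mu>))"
  thus "\<exists>b. sc c v = (\<Sum>\<mu>\<in>Wd L. sc (b \<mu>) (sw \<mu>))"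
    by (intro exI[of _ "\<lambda>\<mu>. c * a \<mu>"]) (simp add: sc_sum_right sc_sc)
qed

lemma V_sum: "finite A \<Longrightarrow> (\<And>i. i \<in> A \<Longrightarrow> f i \<in> V L) \<Longrightarrow> sum f A \<in> V L"
  by (induction A rule: finite_induct) (auto intro: V_add)

lemma V_sw: "\<mu> \<in> Wd L \<Longrightarrow> sw \<mu> \<in> V L"
  unfolding V_def
proof (intro CollectI exI)
  assume m: "\<mu> \<in> Wd L"
  show "sw \<mu> = (\<Sum>\<nu>\<in>Wd L. sc (if \<nu> = \<mu> then 1 else 0) (sw \<nu>))"
    using m by (simp add: if_distrib[of "\<lambda>c. sc c _"] cong: if_cong)
qed

lemma V_cases:
  assumes "v \<in> V L" obtains a where "v = (\<Sum>\<mu>\<in>Wd L. sc (a \<mu>) (sw \<mu>))"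
  using assms unfolding V_def by blast

lemma V_coef:
  assumes "\<nu> \<in> Wd L" shows "st (sw \<nu>) * (\<Sum>\<mu>\<in>Wd L. sc (a \<mu>) (sw \<mu>)) = sc (a \<nu>) 1"
proof -
  have "st (sw \<nu>) * (\<Sum>\<mu>\<in>Wd L. sc (a \<mu>) (sw \<mu>)) = (\<Sum>\<mu>\<in>Wd L. sc (a \<mu>) (st (sw \<nu>) * sw \<mu>))"
    by (simp add: sum_distrib_left sc_mult_right)
  also have "\<dots> = (\<Sum>\<mu>\<in>Wd L. if \<mu> = \<nu> then sc (a \<nu>) 1 else 0)"
    by (rule sum.cong) (use assms in \<open>auto simp: sw_orth\<close>)
  also have "\<dots> = sc (a \<nu>) 1" using assms by simp
  finally show ?thesis .
qed

definition cf :: "'a \<Rightarrow> nat list \<Rightarrow> complex" where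
  "cf v \<mu> = (SOME c. st (sw \<mu>) * v = sc c 1)"

lemma cf: assumes "v \<in> V L" "\<mu> \<in> Wd L" shows "st (sw \<mu>) * v = sc (cf v \<mu>) 1"
proof -
  obtain a where a: "v = (\<Sum>\<mu>\<in>Wd L. sc (a \<mu>) (sw \<mu>))" using assms(1) by (rule V_cases)
  have "\<exists>c. st (sw \<mu>) * v = sc c 1" using V_coef[OF assms(2), of a] a by blast
  thus ?thesis unfolding cf_def by (rule someI_ex)
qed

lemma expand: "x = (\<Sum>\<mu>\<in>Wd L. sw \<mu> * (st (sw \<mu>) * x))"
proof -
  have "x = (\<Sum>\<mu>\<in>Wd L. sw \<mu> * st (sw \<mu>)) * x" by (simp add: sum_proj)
  thus ?thesis by (simp add: sum_distrib_right mult.assoc)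
qed

lemma V_expand: assumes "v \<in> V L" shows "v = (\<Sum>\<mu>\<in>Wd L. sc (cf v \<mu>) (sw \<mu>))"
proof -
  have "v = (\<Sum>\<mu>\<in>Wd L. sw \<mu> * (st (sw \<mu>) * v))" by (rule expand)
  also have "\<dots> = (\<Sum>\<mu>\<in>Wd L. sc (cf v \<mu>) (sw \<mu>))"
    by (rule sum.cong) (use cf[OF assms] in \<open>auto simp: sc_mult_right\<close>)
  finally show ?thesis .
qed

lemma V_sq: assumes "v \<in> V L"
  shows "st v * v = sc (complex_of_real (\<Sum>\<mu>\<in>Wd L. (cmod (cf v \<mu>))\<^sup>2)) 1"
proof -
  have "st v * v = st (\<Sum>\<mu>\<in>Wd L. sc (cf v \<mu>) (sw \<mu>)) * v" using V_expand[OF assms] by simp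
  also have "\<dots> = (\<Sum>\<mu>\<in>Wd L. sc (cnj (cf v \<mu>)) (st (sw \<mu>) * v))"
    by (simp add: st_sum st_sc sum_distrib_right sc_mult_left)
  also have "\<dots> = (\<Sum>\<mu>\<in>Wd L. sc (complex_of_real ((cmod (cf v \<mu>))\<^sup>2)) 1)"
    by (rule sum.cong) (use cf[OF assms] in \<open>simp_all only: sc_sc cnj_mult_self\<close>)
  also have "\<dots> = sc (complex_of_real (\<Sum>\<mu>\<in>Wd L. (cmod (cf v \<mu>))\<^sup>2)) 1"
    by (simp add: sc_sum_left)
  finally show ?thesis .
qed

lemma V_normsq: assumes "v \<in> V L" shows "(norm v)\<^sup>2 = (\<Sum>\<mu>\<in>Wd L. (cmod (cf v \<mu>))\<^sup>2)"
proof -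
  have "(norm v)\<^sup>2 = norm (st v * v)" by (simp add: cstar_id)
  also have "\<dots> = \<bar>\<Sum>\<mu>\<in>Wd L. (cmod (cf v \<mu>))\<^sup>2\<bar>" unfolding V_sq[OF assms] norm_sc norm_of_real by simp
  also have "\<dots> = (\<Sum>\<mu>\<in>Wd L. (cmod (cf v \<mu>))\<^sup>2)" by (intro abs_of_nonneg sum_nonneg) auto
  finally show ?thesis .
qed

lemma V_sq': assumes "v \<in> V L" shows "st v * v = sc (complex_of_real ((norm v)\<^sup>2)) 1"
  using V_sq[OF assms] V_normsq[OF assms] by simp

lemma V_mult: assumes "v \<in> V A" "w \<in> V B" shows "v * w \<in> V (A + B)"
proof -
  obtain a where a: "v = (\<Sum>\<mu>\<in>Wd A. sc (a \<mu>) (sw \<mu>))" using assms(1) by (rule V_cases)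
  obtain b where b: "w = (\<Sum>\<mu>\<in>Wd B. sc (b \<mu>) (sw \<mu>))" using assms(2) by (rule V_cases)
  have "v * w = (\<Sum>\<mu>\<in>Wd A. \<Sum>\<nu>\<in>Wd B. sc (a \<mu> * b \<nu>) (sw (\<mu> @ \<nu>)))"
    unfolding a b sum_product sc_mult_both sw_append ..
  also have "\<dots> \<in> V (A + B)"
    by (intro V_sum V_sc V_sw Wd_append) auto
  finally show ?thesis .
qed

lemma sw_st_sw:
  assumes "\<mu> \<in> Wd A" "\<gamma> \<in> Wd (A + B)" shows "st (sw \<mu>) * sw \<gamma> \<in> V B"
proof -
  have sets: "set \<mu> \<subseteq> {..<n}" "set \<gamma> \<subseteq> {..<n}" and len: "length \<mu> = A" "length \<gamma> = A + B"
    using assms unfolding Wd_def by auto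
  show ?thesis
  proof (cases "\<exists>r. \<gamma> = \<mu> @ r")
    case True
    hence "st (sw \<mu>) * sw \<gamma> = sw (drop (length \<mu>) \<gamma>)" using word_prod[OF sets] by simp
    moreover have "drop (length \<mu>) \<gamma> \<in> Wd B" using sets len unfolding Wd_def
      by (auto dest: in_set_dropD)
    ultimately show ?thesis by (simp add: V_sw)
  next
    case False
    have "\<not> (\<exists>r. \<mu> = \<gamma> @ r)"
    proof
      assume "\<exists>r. \<mu> = \<gamma> @ r"
      then obtain r where r: "\<mu> = \<gamma> @ r" by blast
      hence "r = []" using len by simp
      thus False using False r by simp
    qed
    hence "st (sw \<mu>) * sw \<gamma> = 0" using word_prod[OF sets] False by simp
    thus ?thesis by simp
  qed
qed

lemma V_stmult: assumes "u \<in> V A" "w \<in> V (A + B)" shows "st u * w \<in> V B"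
proof -
  obtain a where a: "u = (\<Sum>\<mu>\<in>Wd A. sc (a \<mu>) (sw \<mu>))" using assms(1) by (rule V_cases)
  obtain b where b: "w = (\<Sum>\<mu>\<in>Wd (A + B). sc (b \<mu>) (sw \<mu>))" using assms(2) by (rule V_cases)
  have "st u * w = (\<Sum>\<mu>\<in>Wd A. \<Sum>\<gamma>\<in>Wd (A + B). sc (cnj (a \<mu>) * b \<gamma>) (st (sw \<mu>) * sw \<gamma>))"
    unfolding a b st_sum st_sc sum_product sc_mult_both ..
  also have "\<dots> \<in> V B"
    by (intro V_sum V_sc sw_st_sw) auto
  finally show ?thesis .
qed

end



context cuntz
begin

definition lev :: "'a \<Rightarrow> nat \<Rightarrow> nat \<Rightarrow> bool" where
  "lev b M L \<longleftrightarrow> (\<forall>\<alpha>\<in>Wd L. b * sw \<alpha> \<in> V M)"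

lemma levD: "lev b M L \<Longrightarrow> \<alpha> \<in> Wd L \<Longrightarrow> b * sw \<alpha> \<in> V M" unfolding lev_def by blast

lemma lev_zero: "lev 0 M L" unfolding lev_def by simp
lemma lev_add: "lev a M L \<Longrightarrow> lev b M L \<Longrightarrow> lev (a + b) M L"
  unfolding lev_def by (simp add: distrib_right V_add)
lemma lev_sc: "lev a M L \<Longrightarrow> lev (sc c a) M L"
  unfolding lev_def by (simp add: sc_mult_left V_sc)

lemma lev_V: assumes "lev a M K" "w \<in> V K" shows "a * w \<in> V M"
proof -
  obtain c where c: "w = (\<Sum>\<mu>\<in>Wd K. sc (c \<mu>) (sw \<mu>))" using assms(2) by (rule V_cases)
  have "a * w = (\<Sum>\<mu>\<in>Wd K. sc (c \<mu>) (a * sw \<mu>))" unfolding c by (simp add: sum_distrib_left sc_mult_right)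
  also have "\<dots> \<in> V M" by (intro V_sum V_sc levD[OF assms(1)]) auto
  finally show ?thesis .
qed

lemma lev_mult: "lev a M K \<Longrightarrow> lev b K L \<Longrightarrow> lev (a * b) M L"
  unfolding lev_def by (simp add: mult.assoc lev_V[unfolded lev_def])

lemma lev_vec: "v \<in> V L \<Longrightarrow> lev v (L + K) K"
  unfolding lev_def by (auto intro: V_mult V_sw)

lemma lev_st_vec: "u \<in> V A \<Longrightarrow> lev (st u) K (A + K)"
  unfolding lev_def by (auto intro: V_stmult V_sw)

lemma Wd_take_drop: "\<gamma> \<in> Wd (L + r) \<Longrightarrow> take L \<gamma> \<in> Wd L \<and> drop L \<gamma> \<in> Wd r"
  unfolding Wd_def by (auto dest: in_set_takeD in_set_dropD)

lemma lev_refine: assumes "lev b M L" shows "lev b (M + r) (L + r)"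
  unfolding lev_def
proof
  fix \<gamma> assume g: "\<gamma> \<in> Wd (L + r)"
  have "b * sw \<gamma> = (b * sw (take L \<gamma>)) * sw (drop L \<gamma>)"
    by (simp add: mult.assoc sw_append[symmetric])
  also have "\<dots> \<in> V (M + r)"
    using Wd_take_drop[OF g] by (intro V_mult levD[OF assms] V_sw) auto
  finally show "b * sw \<gamma> \<in> V (M + r)" .
qed

lemma lev_st_coef:
  assumes "lev b M L" "\<mu> \<in> Wd M" "\<alpha> \<in> Wd L"
  shows "st (sw \<alpha>) * (st b * sw \<mu>) = sc (cnj (cf (b * sw \<alpha>) \<mu>)) 1"
proof -
  have "st (sw \<alpha>) * (st b * sw \<mu>) = st (st (sw \<mu>) * (b * sw \<alpha>))" by (simp add: st_mult mult.assoc)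
  also have "st (sw \<mu>) * (b * sw \<alpha>) = sc (cf (b * sw \<alpha>) \<mu>) 1" by (rule cf[OF levD[OF assms(1,3)] assms(2)])
  finally show ?thesis by (simp add: st_sc)
qed

lemma lev_st: assumes "lev b M L" shows "lev (st b) L M"
  unfolding lev_def
proof
  fix \<mu> assume m: "\<mu> \<in> Wd M"
  have "st b * sw \<mu> = (\<Sum>\<alpha>\<in>Wd L. sw \<alpha> * (st (sw \<alpha>) * (st b * sw \<mu>)))" by (rule expand)
  also have "\<dots> = (\<Sum>\<alpha>\<in>Wd L. sc (cnj (cf (b * sw \<alpha>) \<mu>)) (sw \<alpha>))"
    by (rule sum.cong) (use lev_st_coef[OF assms m] in \<open>auto simp: sc_mult_right\<close>)
  also have "\<dots> \<in> V L" by (intro V_sum V_sc V_sw) auto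
  finally show "st b * sw \<mu> \<in> V L" .
qed

definition hs :: "'a \<Rightarrow> nat \<Rightarrow> real" where
  "hs b L = (\<Sum>\<alpha>\<in>Wd L. (norm (b * sw \<alpha>))\<^sup>2)"

lemma hs_nonneg: "hs b L \<ge> 0" unfolding hs_def by (intro sum_nonneg) auto

lemma hs_swap: assumes "lev b M L" shows "hs (st b) M = hs b L"
proof -
  have "hs b L = (\<Sum>\<alpha>\<in>Wd L. \<Sum>\<mu>\<in>Wd M. (cmod (cf (b * sw \<alpha>) \<mu>))\<^sup>2)"
    unfolding hs_def by (rule sum.cong) (auto intro: V_normsq levD[OF assms])
  also have "\<dots> = (\<Sum>\<mu>\<in>Wd M. \<Sum>\<alpha>\<in>Wd L. (cmod (cf (b * sw \<alpha>) \<mu>))\<^sup>2)" by (rule sum.swap)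
  also have "\<dots> = (\<Sum>\<mu>\<in>Wd M. \<Sum>\<alpha>\<in>Wd L. (cmod (cf (st b * sw \<mu>) \<alpha>))\<^sup>2)"
  proof (intro sum.cong refl)
    fix \<mu> \<alpha> assume m: "\<mu> \<in> Wd M" and a: "\<alpha> \<in> Wd L"
    have "sc (cf (st b * sw \<mu>) \<alpha>) 1 = sc (cnj (cf (b * sw \<alpha>) \<mu>)) (1::'a)"
      using cf[OF levD[OF lev_st[OF assms] m] a] lev_st_coef[OF assms m a] by simp
    hence "cf (st b * sw \<mu>) \<alpha> = cnj (cf (b * sw \<alpha>) \<mu>)" by (rule sc1_inj)
    thus "(cmod (cf (b * sw \<alpha>) \<mu>))\<^sup>2 = (cmod (cf (st b * sw \<mu>) \<alpha>))\<^sup>2" by simp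
  qed
  also have "\<dots> = hs (st b) M"
    unfolding hs_def by (rule sum.cong) (auto intro: V_normsq[symmetric] levD[OF lev_st[OF assms]])
  finally show ?thesis by simp
qed

lemma Wd_append_sum: "(\<Sum>\<gamma>\<in>Wd (a + b). f \<gamma>) = (\<Sum>\<mu>\<in>Wd a. \<Sum>\<nu>\<in>Wd b. f (\<mu> @ \<nu>))"
proof -
  have eq: "Wd (a + b) = (\<lambda>(\<mu>, \<nu>). \<mu> @ \<nu>) ` (Wd a \<times> Wd b)"
  proof
    show "Wd (a + b) \<subseteq> (\<lambda>(\<mu>, \<nu>). \<mu> @ \<nu>) ` (Wd a \<times> Wd b)"
    proof
      fix \<gamma> assume g: "\<gamma> \<in> Wd (a + b)"
      hence "(take a \<gamma>, drop a \<gamma>) \<in> Wd a \<times> Wd b" using Wd_take_drop by auto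
      thus "\<gamma> \<in> (\<lambda>(\<mu>, \<nu>). \<mu> @ \<nu>) ` (Wd a \<times> Wd b)" by (auto intro!: image_eqI[of _ _ "(take a \<gamma>, drop a \<gamma>)"])
    qed
    show "(\<lambda>(\<mu>, \<nu>). \<mu> @ \<nu>) ` (Wd a \<times> Wd b) \<subseteq> Wd (a + b)" by (auto intro: Wd_append)
  qed
  have inj: "inj_on (\<lambda>(\<mu>, \<nu>). \<mu> @ \<nu>) (Wd a \<times> Wd b)"
    by (auto simp: inj_on_def Wd_def)
  have "(\<Sum>\<gamma>\<in>Wd (a + b). f \<gamma>) = (\<Sum>p\<in>Wd a \<times> Wd b. f (fst p @ snd p))"
    unfolding eq by (subst sum.reindex[OF inj]) (simp add: case_prod_beta)
  also have "\<dots> = (\<Sum>(\<mu>, \<nu>)\<in>Wd a \<times> Wd b. f (\<mu> @ \<nu>))" by (simp add: case_prod_beta)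
  also have "\<dots> = (\<Sum>\<mu>\<in>Wd a. \<Sum>\<nu>\<in>Wd b. f (\<mu> @ \<nu>))" by (rule sum.cartesian_product[symmetric])
  finally show ?thesis .
qed

definition Phi :: "nat \<Rightarrow> 'a \<Rightarrow> 'a" where
  "Phi m x = sc (complex_of_real (1 / real n ^ m)) (\<Sum>\<alpha>\<in>Wd m. st (sw \<alpha>) * x * sw \<alpha>)"

lemma npos: "real n > 0" using n2 by simp

lemma Phi_add_index: "Phi (a + b) x = Phi b (Phi a x)"
proof -
  have "(\<Sum>\<gamma>\<in>Wd (a + b). st (sw \<gamma>) * x * sw \<gamma>)
      = (\<Sum>\<mu>\<in>Wd a. \<Sum>\<nu>\<in>Wd b. st (sw \<nu>) * (st (sw \<mu>) * x * sw \<mu>) * sw \<nu>)"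
    by (simp add: Wd_append_sum sw_append st_mult mult.assoc)
  also have "\<dots> = (\<Sum>\<nu>\<in>Wd b. st (sw \<nu>) * (\<Sum>\<mu>\<in>Wd a. st (sw \<mu>) * x * sw \<mu>) * sw \<nu>)"
    by (subst sum.swap) (simp add: sum_distrib_left sum_distrib_right)
  finally have e: "(\<Sum>\<gamma>\<in>Wd (a + b). st (sw \<gamma>) * x * sw \<gamma>) = \<dots>" .
  define ca where "ca = complex_of_real (1 / real n ^ a)"
  define cb where "cb = complex_of_real (1 / real n ^ b)"
  define S where "S = (\<Sum>\<mu>\<in>Wd a. st (sw \<mu>) * x * sw \<mu>)"
  have "Phi b (Phi a x) = sc cb (\<Sum>\<nu>\<in>Wd b. st (sw \<nu>) * sc ca S * sw \<nu>)"
    unfolding Phi_def ca_def cb_def S_def ..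
  also have "\<dots> = sc cb (\<Sum>\<nu>\<in>Wd b. sc ca (st (sw \<nu>) * S * sw \<nu>))"
    by (simp only: sc_mult_left sc_mult_right)
  also have "\<dots> = sc (cb * ca) (\<Sum>\<nu>\<in>Wd b. st (sw \<nu>) * S * sw \<nu>)"
    by (simp only: sc_sum_right[symmetric] sc_sc)
  also have "cb * ca = complex_of_real (1 / real n ^ (a + b))" unfolding ca_def cb_def
    by (simp add: power_add)
  also have "(\<Sum>\<nu>\<in>Wd b. st (sw \<nu>) * S * sw \<nu>) = (\<Sum>\<gamma>\<in>Wd (a + b). st (sw \<gamma>) * x * sw \<gamma>)"
    unfolding e S_def ..
  finally show ?thesis unfolding Phi_def by simp
qed

lemma Phi_const: "Phi m (sc c 1) = sc c 1"
proof -
  have "(\<Sum>\<alpha>\<in>Wd m. st (sw \<alpha>) * sc c 1 * sw \<alpha>) = (\<Sum>\<alpha>\<in>Wd m. sc c 1)"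
    by (rule sum.cong) (auto simp: sc_mult_right sc_mult_left sw_orth)
  also have "\<dots> = sc (\<Sum>\<alpha>\<in>Wd m. c) 1" by (rule sc_sum_left[symmetric])
  also have "(\<Sum>\<alpha>\<in>Wd m. c) = c * of_nat (n ^ m)" by (simp add: Wd_card)
  finally show ?thesis unfolding Phi_def using npos by (simp add: sc_sc)
qed

lemma Phi_contr: "norm (Phi m x) \<le> norm x"
proof -
  have "norm (\<Sum>\<alpha>\<in>Wd m. st (sw \<alpha>) * x * sw \<alpha>) \<le> (\<Sum>\<alpha>\<in>Wd m. norm x)"
  proof (rule sum_norm_le)
    fix \<alpha> assume "\<alpha> \<in> Wd m"
    hence "norm (st (sw \<alpha>) * x * sw \<alpha>) \<le> 1 * norm x * 1"
      using norm3[of "st (sw \<alpha>)" x "sw \<alpha>"] norm_sw_Wd by simp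
    thus "norm (st (sw \<alpha>) * x * sw \<alpha>) \<le> norm x" by simp
  qed
  also have "\<dots> = real n ^ m * norm x" by (simp add: Wd_card)
  finally show ?thesis unfolding Phi_def norm_sc norm_of_real using npos by (simp add: field_simps)
qed

lemma Phi_diff: "Phi m (x - y) = Phi m x - Phi m y"
  unfolding Phi_def by (simp add: algebra_simps sum_subtractf sc_diff_right)

lemma Phi_lip: "norm (Phi m x - Phi m y) \<le> norm (x - y)"
  using Phi_contr[of m "x - y"] by (simp add: Phi_diff)

definition Dm :: "'a set" where "Dm = {x. \<exists>c. (\<lambda>m. Phi m x) \<longlonglongrightarrow> sc c 1}"
definition T :: "'a \<Rightarrow> complex" where "T x = (THE c. (\<lambda>m. Phi m x) \<longlonglongrightarrow> sc c 1)"

lemma T_unique: "(\<lambda>m. Phi m x) \<longlonglongrightarrow> sc c 1 \<Longrightarrow> T x = c"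
  unfolding T_def
proof (rule the_equality)
  fix d assume "(\<lambda>m. Phi m x) \<longlonglongrightarrow> sc c 1" "(\<lambda>m. Phi m x) \<longlonglongrightarrow> sc d 1"
  hence "sc d 1 = sc c (1::'a)" using LIMSEQ_unique by blast
  thus "d = c" by (rule sc1_inj)
qed

lemma T_lim: "x \<in> Dm \<Longrightarrow> (\<lambda>m. Phi m x) \<longlonglongrightarrow> sc (T x) 1"
  unfolding Dm_def using T_unique by blast

lemma T_stab: assumes "Phi L x = sc c 1" shows "x \<in> Dm" "T x = c"
proof -
  have "Phi m x = sc c 1" if "m \<ge> L" for m
  proof -
    have "Phi m x = Phi (L + (m - L)) x" using that by simp
    also have "\<dots> = sc c 1" by (simp only: Phi_add_index assms Phi_const)
    finally show ?thesis .
  qed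
  hence lim: "(\<lambda>m. Phi m x) \<longlonglongrightarrow> sc c 1"
    by (intro tendsto_eventually) (auto simp: eventually_sequentially)
  thus "x \<in> Dm" unfolding Dm_def by blast
  show "T x = c" by (rule T_unique[OF lim])
qed

lemma T_lip: assumes "x \<in> Dm" "y \<in> Dm" shows "cmod (T x - T y) \<le> norm (x - y)"
proof -
  have "(\<lambda>m. norm (Phi m x - Phi m y)) \<longlonglongrightarrow> norm (sc (T x) 1 - sc (T y) (1::'a))"
    by (intro tendsto_intros T_lim assms)
  moreover have "norm (sc (T x) 1 - sc (T y) (1::'a)) = cmod (T x - T y)"
    by (simp add: sc_diff_left[symmetric] norm_sc)
  ultimately show ?thesis
    by (metis (no_types, lifting) Lim_bounded Phi_lip)
qed

lemma T_closed:
  assumes D: "\<And>j. a j \<in> Dm" and lim: "a \<longlonglongrightarrow> x"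
  shows "x \<in> Dm" "(\<lambda>j. T (a j)) \<longlonglongrightarrow> T x"
proof -
  have Ca: "Cauchy a" using lim by (rule LIMSEQ_imp_Cauchy)
  have Cc: "Cauchy (\<lambda>j. T (a j))"
  proof (rule metric_CauchyI)
    fix e :: real assume e: "e > 0"
    obtain M where M: "\<And>i j. i \<ge> M \<Longrightarrow> j \<ge> M \<Longrightarrow> dist (a i) (a j) < e"
      using metric_CauchyD[OF Ca e] by blast
    show "\<exists>M. \<forall>i\<ge>M. \<forall>j\<ge>M. dist (T (a i)) (T (a j)) < e"
    proof (intro exI allI impI)
      fix i j assume "i \<ge> M" "j \<ge> M"
      thus "dist (T (a i)) (T (a j)) < e" using T_lip[OF D D, of i j] M[of i j]
        by (simp add: dist_norm)
    qed
  qed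
  then obtain c where c: "(\<lambda>j. T (a j)) \<longlonglongrightarrow> c" using Cauchy_convergent_iff convergent_def by blast
  have "(\<lambda>m. Phi m x) \<longlonglongrightarrow> sc c 1"
  proof (rule LIMSEQ_I)
    fix e :: real assume e: "e > 0"
    obtain J1 where J1: "\<And>j. j \<ge> J1 \<Longrightarrow> norm (a j - x) < e/3"
      using LIMSEQ_D[OF lim, of "e/3"] e by auto
    obtain J2 where J2: "\<And>j. j \<ge> J2 \<Longrightarrow> norm (T (a j) - c) < e/3"
      using LIMSEQ_D[OF c, of "e/3"] e by auto
    define j where "j = max J1 J2"
    have j1: "norm (a j - x) < e/3" and j2: "norm (T (a j) - c) < e/3" unfolding j_def using J1 J2 by auto
    obtain M where M: "\<And>m. m \<ge> M \<Longrightarrow> norm (Phi m (a j) - sc (T (a j)) 1) < e/3"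
      using LIMSEQ_D[OF T_lim[OF D], of "e/3"] e by auto
    show "\<exists>M. \<forall>m\<ge>M. norm (Phi m x - sc c 1) < e"
    proof (intro exI allI impI)
      fix m assume m: "m \<ge> M"
      let ?A = "Phi m x - Phi m (a j)" and ?B = "Phi m (a j) - sc (T (a j)) 1" and ?C = "sc (T (a j) - c) (1::'a)"
      have eq: "Phi m x - sc c 1 = ?A + ?B + ?C"
        by (simp add: sc_diff_left)
      have "norm (Phi m x - sc c 1) \<le> norm ?A + norm ?B + norm ?C"
        unfolding eq using norm_triangle_ineq[of "?A + ?B" ?C] norm_triangle_ineq[of ?A ?B] by linarith
      also have "\<dots> < e/3 + e/3 + e/3"
      proof -
        have "norm (Phi m x - Phi m (a j)) \<le> norm (x - a j)" by (rule Phi_lip)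
        also have "\<dots> < e/3" using j1 by (simp add: norm_minus_commute)
        finally have t1: "norm (Phi m x - Phi m (a j)) < e/3" .
        have t3: "norm (sc (T (a j) - c) (1::'a)) < e/3" using j2 by (simp add: norm_sc)
        show ?thesis using t1 M[OF m] t3 by linarith
      qed
      finally show "norm (Phi m x - sc c 1) < e" by simp
    qed
  qed
  thus "x \<in> Dm" unfolding Dm_def by blast
  have "T x = c" by (rule T_unique) fact
  thus "(\<lambda>j. T (a j)) \<longlonglongrightarrow> T x" using c by simp
qed

lemma T_lev: assumes "lev b M L"
  shows "st b * b \<in> Dm" "T (st b * b) = complex_of_real (hs b L / real n ^ L)"
proof -
  have "(\<Sum>\<alpha>\<in>Wd L. st (sw \<alpha>) * (st b * b) * sw \<alpha>) = (\<Sum>\<alpha>\<in>Wd L. sc (complex_of_real ((norm (b * sw \<alpha>))\<^sup>2)) 1)"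
  proof (rule sum.cong)
    fix \<alpha> assume a: "\<alpha> \<in> Wd L"
    have "st (sw \<alpha>) * (st b * b) * sw \<alpha> = st (b * sw \<alpha>) * (b * sw \<alpha>)" by (simp add: st_mult mult.assoc)
    also have "\<dots> = sc (complex_of_real ((norm (b * sw \<alpha>))\<^sup>2)) 1" by (rule V_sq'[OF levD[OF assms a]])
    finally show "st (sw \<alpha>) * (st b * b) * sw \<alpha> = sc (complex_of_real ((norm (b * sw \<alpha>))\<^sup>2)) 1" .
  qed simp
  also have "\<dots> = sc (complex_of_real (hs b L)) 1" unfolding hs_def by (simp add: sc_sum_left)
  finally have "Phi L (st b * b) = sc (complex_of_real (hs b L / real n ^ L)) 1"
    unfolding Phi_def by (simp add: sc_sc)
  thus "st b * b \<in> Dm" "T (st b * b) = complex_of_real (hs b L / real n ^ L)" by (rule T_stab)+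
qed

lemma crude: "norm a \<le> (\<Sum>\<alpha>\<in>Wd L. norm (a * sw \<alpha>))"
proof -
  have "a = (\<Sum>\<alpha>\<in>Wd L. (a * sw \<alpha>) * st (sw \<alpha>))"
    using sum_proj[of L] by (metis (no_types, lifting) mult.assoc mult_1_right sum.cong sum_distrib_left)
  hence "norm a = norm (\<Sum>\<alpha>\<in>Wd L. (a * sw \<alpha>) * st (sw \<alpha>))" by simp
  also have "\<dots> \<le> (\<Sum>\<alpha>\<in>Wd L. norm (a * sw \<alpha>))"
  proof (rule sum_norm_le)
    fix \<alpha> assume "\<alpha> \<in> Wd L"
    thus "norm (a * sw \<alpha> * st (sw \<alpha>)) \<le> norm (a * sw \<alpha>)"
      using norm_mult_ineq[of "a * sw \<alpha>" "st (sw \<alpha>)"] norm_sw_Wd by simp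
  qed
  finally show ?thesis .
qed

lemma unit_exists: "\<exists>u. u \<in> V L \<and> norm u = 1"
proof -
  have "replicate L 0 \<in> Wd L" using n2 unfolding Wd_def by auto
  thus ?thesis using V_sw norm_sw_Wd by blast
qed

lemma opn:
  assumes q: "lev q M L" and e: "e > 0"
  shows "\<exists>v. v \<in> V L \<and> norm v = 1 \<and> norm q - e \<le> norm (q * v)"
proof (rule ccontr)
  assume "\<not> ?thesis"
  hence H: "\<And>v. v \<in> V L \<Longrightarrow> norm v = 1 \<Longrightarrow> norm (q * v) < norm q - e" by force
  define K where "K = norm q - e"
  obtain u0 where u0: "u0 \<in> V L" "norm u0 = 1" using unit_exists by blast
  have Kpos: "K > 0" using H[OF u0] norm_ge_zero[of "q * u0"] unfolding K_def by linarith
  have qpos: "norm q > 0" using Kpos e unfolding K_def by linarith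
  have hom: "norm (q * v) \<le> K * norm v" if v: "v \<in> V L" for v
  proof (cases "v = 0")
    case True thus ?thesis by simp
  next
    case False
    define v' where "v' = sc (complex_of_real (1 / norm v)) v"
    have v'V: "v' \<in> V L" unfolding v'_def by (rule V_sc[OF v])
    have nv': "norm v' = 1" unfolding v'_def using False by (simp add: norm_sc norm_divide)
    have "norm (q * v') = norm (q * v) / norm v" unfolding v'_def
      by (simp add: sc_mult_right norm_sc norm_divide)
    hence "norm (q * v) / norm v < K" using H[OF v'V nv'] unfolding K_def by simp
    thus ?thesis using False by (simp add: field_simps)
  qed
  define r where "r = st q * q"
  have lr: "lev r L L" unfolding r_def by (rule lev_mult[OF lev_st[OF q] q])
  have pw: "r ^ m * w \<in> V L \<and> norm (r ^ m * w) \<le> (norm q * K) ^ m * norm w" if w: "w \<in> V L" for m w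
  proof (induction m)
    case 0 thus ?case using w by simp
  next
    case (Suc m)
    have inV: "r ^ m * w \<in> V L" using Suc by simp
    have "r ^ Suc m * w = st q * (q * (r ^ m * w))" unfolding r_def by (simp add: mult.assoc)
    moreover have "r ^ Suc m * w \<in> V L"
      using lev_V[OF lr inV] by (simp add: mult.assoc)
    moreover have "norm (st q * (q * (r ^ m * w))) \<le> norm q * (K * norm (r ^ m * w))"
    proof -
      have "norm (st q * (q * (r ^ m * w))) \<le> norm (st q) * norm (q * (r ^ m * w))" by (rule norm_mult_ineq)
      also have "\<dots> \<le> norm q * (K * norm (r ^ m * w))" using hom[OF inV] by (simp add: mult_left_mono)
      finally show ?thesis .
    qed
    moreover have "norm q * (K * norm (r ^ m * w)) \<le> norm q * (K * ((norm q * K) ^ m * norm w))"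
      using Suc Kpos by (intro mult_left_mono) auto
    ultimately show ?case by (simp add: algebra_simps)
  qed
  have bound: "norm (r ^ m) \<le> real n ^ L * (norm q * K) ^ m" for m
  proof -
    have "norm (r ^ m) \<le> (\<Sum>\<alpha>\<in>Wd L. norm (r ^ m * sw \<alpha>))" by (rule crude)
    also have "\<dots> \<le> (\<Sum>\<alpha>\<in>Wd L. (norm q * K) ^ m)"
      by (rule sum_mono) (use pw V_sw norm_sw_Wd in force)
    also have "\<dots> = real n ^ L * (norm q * K) ^ m" by (simp add: Wd_card)
    finally show ?thesis .
  qed
  have sr: "st r = r" unfolding r_def by (simp add: st_mult)
  have nr: "norm r = (norm q)\<^sup>2" unfolding r_def by (rule cstar_id)
  have key: "(norm q / K) ^ (2 ^ j) \<le> real n ^ L" for j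
  proof -
    define m :: nat where "m = 2 ^ j"
    have "((norm q)\<^sup>2) ^ m \<le> real n ^ L * (norm q * K) ^ m"
      using bound[of m] norm_selfadj_pow2[OF sr, of j] nr unfolding m_def by simp
    hence "(norm q * norm q) ^ m \<le> real n ^ L * (norm q * K) ^ m" by (simp add: power2_eq_square)
    hence "norm q ^ m * norm q ^ m \<le> real n ^ L * K ^ m * norm q ^ m" by (simp add: power_mult_distrib algebra_simps)
    hence "norm q ^ m \<le> real n ^ L * K ^ m" using qpos by simp
    hence "norm q ^ m / K ^ m \<le> real n ^ L" using Kpos by (simp add: field_simps)
    thus ?thesis unfolding m_def by (simp add: power_divide)
  qed
  have gt: "norm q / K > 1" using Kpos e unfolding K_def by (simp add: field_simps)
  obtain j where j: "real n ^ L < (norm q / K) ^ j" using real_arch_pow[OF gt] by blast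
  have "(norm q / K) ^ j \<le> (norm q / K) ^ (2 ^ j)"
    by (rule power_increasing) (use gt less_exp[of j] in auto)
  thus False using key[of j] j by simp
qed

end



context cuntz
begin

inductive_set Pol :: "'a set" where
  gen: "set \<mu> \<subseteq> {..<n} \<Longrightarrow> set \<nu> \<subseteq> {..<n} \<Longrightarrow> sw \<mu> * st (sw \<nu>) \<in> Pol"
| add: "a \<in> Pol \<Longrightarrow> b \<in> Pol \<Longrightarrow> a + b \<in> Pol"
| scl: "a \<in> Pol \<Longrightarrow> sc c a \<in> Pol"

lemma Pol_zero: "0 \<in> Pol" using Pol.scl[OF Pol.gen[of "[]" "[]"], of 0] by simp
lemma Pol_one: "1 \<in> Pol" using Pol.gen[of "[]" "[]"] by simp
lemma Pol_s: "i < n \<Longrightarrow> s i \<in> Pol" using Pol.gen[of "[i]" "[]"] by simp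

lemma Pol_st: "a \<in> Pol \<Longrightarrow> st a \<in> Pol"
proof (induction rule: Pol.induct)
  case (gen \<mu> \<nu>) thus ?case using Pol.gen[of \<nu> \<mu>] by (simp add: st_mult)
next
  case (add a b) thus ?case by (simp add: st_add Pol.add)
next
  case (scl a c) thus ?case by (simp add: st_sc Pol.scl)
qed

lemma Pol_gen_mult:
  assumes "set \<mu> \<subseteq> {..<n}" "set \<nu> \<subseteq> {..<n}" "set \<alpha> \<subseteq> {..<n}" "set \<beta> \<subseteq> {..<n}"
  shows "(sw \<mu> * st (sw \<nu>)) * (sw \<alpha> * st (sw \<beta>)) \<in> Pol"
proof -
  have e: "(sw \<mu> * st (sw \<nu>)) * (sw \<alpha> * st (sw \<beta>)) = sw \<mu> * (st (sw \<nu>) * sw \<alpha>) * st (sw \<beta>)"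
    by (simp add: mult.assoc)
  show ?thesis
  proof (cases "\<exists>r. \<alpha> = \<nu> @ r")
    case True
    hence "st (sw \<nu>) * sw \<alpha> = sw (drop (length \<nu>) \<alpha>)" using word_prod[OF assms(2,3)] by simp
    hence "(sw \<mu> * st (sw \<nu>)) * (sw \<alpha> * st (sw \<beta>)) = sw (\<mu> @ drop (length \<nu>) \<alpha>) * st (sw \<beta>)"
      unfolding e by (simp add: sw_append)
    moreover have "set (\<mu> @ drop (length \<nu>) \<alpha>) \<subseteq> {..<n}" using assms by (auto dest: in_set_dropD)
    ultimately show ?thesis using Pol.gen assms(4) by simp
  next
    case F1: False
    show ?thesis
    proof (cases "\<exists>r. \<nu> = \<alpha> @ r")
      case True
      hence "st (sw \<nu>) * sw \<alpha> = st (sw (drop (length \<alpha>) \<nu>))" using word_prod[OF assms(2,3)] F1 by simp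
      hence "(sw \<mu> * st (sw \<nu>)) * (sw \<alpha> * st (sw \<beta>)) = sw \<mu> * st (sw (\<beta> @ drop (length \<alpha>) \<nu>))"
        unfolding e by (simp add: sw_append st_mult mult.assoc)
      moreover have "set (\<beta> @ drop (length \<alpha>) \<nu>) \<subseteq> {..<n}" using assms by (auto dest: in_set_dropD)
      ultimately show ?thesis using Pol.gen assms(1) by simp
    next
      case False
      hence "st (sw \<nu>) * sw \<alpha> = 0" using word_prod[OF assms(2,3)] F1 by simp
      thus ?thesis unfolding e using Pol_zero by simp
    qed
  qed
qed

lemma Pol_mult: "a \<in> Pol \<Longrightarrow> b \<in> Pol \<Longrightarrow> a * b \<in> Pol"
proof (induction a rule: Pol.induct)
  case (gen \<mu> \<nu>)
  note outer = gen.hyps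
  from gen.prems show ?case
  proof (induction b rule: Pol.induct)
    case (gen \<alpha> \<beta>) thus ?case by (rule Pol_gen_mult[OF outer])
  next
    case (add a b) thus ?case by (simp add: distrib_left Pol.add)
  next
    case (scl a c) thus ?case by (simp add: sc_mult_right Pol.scl)
  qed
next
  case (add a b') thus ?case by (simp add: distrib_right Pol.add)
next
  case (scl a c) thus ?case by (simp add: sc_mult_left Pol.scl)
qed

lemma bl_sc: "bounded_linear (sc c)"
proof
  show "sc c (x + y) = sc c x + sc c y" for x y by (rule sc_add_right)
  show "sc c (r *\<^sub>R x) = r *\<^sub>R sc c x" for r x
    by (simp add: sc_real[symmetric] sc_sc mult.commute)
  show "\<exists>K. \<forall>x. norm (sc c x) \<le> norm x * K" by (intro exI[of _ "cmod c"]) (simp add: norm_sc mult.commute)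
qed

lemma bl_st: "bounded_linear st"
proof
  show "st (x + y) = st x + st y" for x y by (rule st_add)
  show "st (r *\<^sub>R x) = r *\<^sub>R st x" for r x
    by (simp add: sc_real[symmetric] st_sc)
  show "\<exists>K. \<forall>x. norm (st x) \<le> norm x * K" by (intro exI[of _ 1]) simp
qed

lemma closure_Pol_props:
  "closure Pol \<in> {B. s ` {..<n} \<subseteq> B \<and> 1 \<in> B \<and> closed B \<and>
      (\<forall>x\<in>B. \<forall>y\<in>B. x + y \<in> B \<and> x * y \<in> B) \<and>
      (\<forall>c. \<forall>x\<in>B. sc c x \<in> B) \<and> (\<forall>x\<in>B. st x \<in> B)}"
proof -
  have s: "s ` {..<n} \<subseteq> closure Pol" using Pol_s closure_subset by blast
  have one: "1 \<in> closure Pol" using Pol_one closure_subset by blast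
  have ar: "x + y \<in> closure Pol \<and> x * y \<in> closure Pol" if xy: "x \<in> closure Pol" "y \<in> closure Pol" for x y
  proof -
    obtain X where X: "\<And>j. X j \<in> Pol" "X \<longlonglongrightarrow> x" using xy(1) unfolding closure_sequential by blast
    obtain Y where Y: "\<And>j. Y j \<in> Pol" "Y \<longlonglongrightarrow> y" using xy(2) unfolding closure_sequential by blast
    have l1: "(\<lambda>j. X j + Y j) \<longlonglongrightarrow> x + y" by (intro tendsto_intros X Y)
    have l2: "(\<lambda>j. X j * Y j) \<longlonglongrightarrow> x * y" by (intro tendsto_intros X Y)
    have m1: "\<And>j. X j + Y j \<in> Pol" using X Y Pol.add by blast
    have m2: "\<And>j. X j * Y j \<in> Pol" using X Y Pol_mult by blast
    have "x + y \<in> closure Pol" unfolding closure_sequential by (rule exI[of _ "\<lambda>j. X j + Y j"]) (simp add: m1 l1)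
    moreover have "x * y \<in> closure Pol" unfolding closure_sequential by (rule exI[of _ "\<lambda>j. X j * Y j"]) (simp add: m2 l2)
    ultimately show ?thesis by simp
  qed
  have scp: "sc c x \<in> closure Pol" if xc: "x \<in> closure Pol" for c x
  proof -
    obtain X where X: "\<And>j. X j \<in> Pol" "X \<longlonglongrightarrow> x" using xc unfolding closure_sequential by blast
    have "(\<lambda>j. sc c (X j)) \<longlonglongrightarrow> sc c x" by (rule bounded_linear.tendsto[OF bl_sc X(2)])
    thus ?thesis unfolding closure_sequential by (intro exI[of _ "\<lambda>j. sc c (X j)"]) (simp add: X Pol.scl)
  qed
  have stp: "st x \<in> closure Pol" if xc: "x \<in> closure Pol" for x
  proof -
    obtain X where X: "\<And>j. X j \<in> Pol" "X \<longlonglongrightarrow> x" using xc unfolding closure_sequential by blast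
    have "(\<lambda>j. st (X j)) \<longlonglongrightarrow> st x" by (rule bounded_linear.tendsto[OF bl_st X(2)])
    thus ?thesis unfolding closure_sequential by (intro exI[of _ "\<lambda>j. st (X j)"]) (simp add: X Pol_st)
  qed
  show ?thesis using s one ar scp stp by auto
qed

end

locale cg = cuntz sc st s n for sc :: "complex \<Rightarrow> 'a::{real_normed_algebra_1,banach} \<Rightarrow> 'a" and st s n +
  fixes \<omega> :: "complex \<Rightarrow> 'a \<Rightarrow> 'a"
  assumes gen: "cstar_gen sc st (s ` {..<n}) = UNIV"
    and gauge: "\<forall>t. cmod t = 1 \<longrightarrow> star_hom sc st (\<omega> t) \<and> (\<forall>i<n. \<omega> t (s i) = sc t (s i))"
begin

lemma closure_Pol: "closure Pol = UNIV"
proof -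
  have "UNIV = cstar_gen sc st (s ` {..<n})" using gen by simp
  also have "\<dots> \<subseteq> closure Pol" unfolding cstar_gen_def using closure_Pol_props by blast
  finally show ?thesis by blast
qed

end



lemma cnj_unit: "cmod t = 1 \<Longrightarrow> cnj t = inverse t"
proof -
  assume t: "cmod t = 1"
  have "t * cnj t = 1" using complex_norm_square[of t] t by simp
  thus ?thesis using t by (metis mult.commute mult_zero_left inverse_unique zero_neq_one)
qed

lemma powi_diff_unit: "cmod t = 1 \<Longrightarrow> t ^ a * (inverse t) ^ b = t powi (int a - int b)"
proof -
  assume t: "cmod t = 1"
  hence t0: "t \<noteq> 0" by auto
  have "t powi (int a - int b) = t powi int a / t powi int b" by (rule power_int_diff) (use t0 in auto)
  thus ?thesis by (simp add: divide_inverse power_inverse)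
qed

context cg
begin

lemma om_hom: "cmod t = 1 \<Longrightarrow> star_hom sc st (\<omega> t)" using gauge by blast
lemma om_s: "cmod t = 1 \<Longrightarrow> i < n \<Longrightarrow> \<omega> t (s i) = sc t (s i)" using gauge by blast

lemma om_sw: assumes t: "cmod t = 1" shows "set \<mu> \<subseteq> {..<n} \<Longrightarrow> \<omega> t (sw \<mu>) = sc (t ^ length \<mu>) (sw \<mu>)"
proof (induction \<mu>)
  case Nil thus ?case using hom_basic(5)[OF om_hom[OF t]] by simp
next
  case (Cons i \<mu>)
  have "\<omega> t (sw (i # \<mu>)) = \<omega> t (s i) * \<omega> t (sw \<mu>)" using hom_basic(2)[OF om_hom[OF t]] by simp
  also have "\<dots> = sc t (s i) * sc (t ^ length \<mu>) (sw \<mu>)" using Cons om_s[OF t] by simp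
  finally show ?case by (simp add: sc_mult_both)
qed

definition hdeg :: "int \<Rightarrow> 'a \<Rightarrow> bool" where
  "hdeg d y \<longleftrightarrow> (\<forall>t. cmod t = 1 \<longrightarrow> \<omega> t y = sc (t powi d) y)"

lemma hd_gen:
  assumes "set \<mu> \<subseteq> {..<n}" "set \<nu> \<subseteq> {..<n}"
  shows "hdeg (int (length \<mu>) - int (length \<nu>)) (sw \<mu> * st (sw \<nu>))"
  unfolding hdeg_def
proof (intro allI impI)
  fix t :: complex assume t: "cmod t = 1"
  note h = hom_basic[OF om_hom[OF t]]
  have "\<omega> t (sw \<mu> * st (sw \<nu>)) = \<omega> t (sw \<mu>) * st (\<omega> t (sw \<nu>))" using h by simp
  also have "\<dots> = sc (t ^ length \<mu>) (sw \<mu>) * sc (cnj t ^ length \<nu>) (st (sw \<nu>))"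
    using om_sw[OF t assms(1)] om_sw[OF t assms(2)] by (simp add: st_sc)
  also have "\<dots> = sc (t ^ length \<mu> * inverse t ^ length \<nu>) (sw \<mu> * st (sw \<nu>))"
    by (simp add: sc_mult_both cnj_unit[OF t])
  also have "t ^ length \<mu> * inverse t ^ length \<nu> = t powi (int (length \<mu>) - int (length \<nu>))"
    by (rule powi_diff_unit[OF t])
  finally show "\<omega> t (sw \<mu> * st (sw \<nu>)) = sc (t powi (int (length \<mu>) - int (length \<nu>))) (sw \<mu> * st (sw \<nu>))" .
qed

lemma hd_zero: "hdeg d 0" unfolding hdeg_def using hom_basic(6)[OF om_hom] by simp
lemma hd_add: "hdeg d a \<Longrightarrow> hdeg d b \<Longrightarrow> hdeg d (a + b)"
  unfolding hdeg_def using hom_basic(1)[OF om_hom] by (simp add: sc_add_right)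
lemma hd_sc: "hdeg d a \<Longrightarrow> hdeg d (sc c a)"
  unfolding hdeg_def using hom_basic(3)[OF om_hom] by (simp add: sc_sc mult.commute)

lemma lev_refine': "lev b (L + k) L \<Longrightarrow> L \<le> L' \<Longrightarrow> lev b (L' + k) L'"
  using lev_refine[of b "L + k" L "L' - L"] by (simp add: algebra_simps)

lemma sum_extend:
  fixes f :: "int \<Rightarrow> 'a"
  assumes z: "\<forall>d. int B < \<bar>d\<bar> \<longrightarrow> f d = 0" and B: "B \<le> B'"
  shows "(\<Sum>d\<in>{-int B'..int B'}. f d) = (\<Sum>d\<in>{-int B..int B}. f d)"
  by (rule sum.mono_neutral_right) (use z B in auto)

lemma decomp:
  assumes "a \<in> Pol"
  shows "\<exists>B f. (\<forall>d. int B < \<bar>d\<bar> \<longrightarrow> f d = 0) \<and> a = (\<Sum>d\<in>{-int B..int B}. f d)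
          \<and> (\<forall>d. hdeg d (f d)) \<and> (\<exists>L. lev (f (int k)) (L + k) L)"
  using assms
proof (induction rule: Pol.induct)
  case (gen \<mu> \<nu>)
  define g where "g = sw \<mu> * st (sw \<nu>)"
  define d0 where "d0 = int (length \<mu>) - int (length \<nu>)"
  define B where "B = length \<mu> + length \<nu>"
  define f where "f d = (if d = d0 then g else 0)" for d
  have z: "\<forall>d. int B < \<bar>d\<bar> \<longrightarrow> f d = 0" unfolding f_def d0_def B_def by auto
  have d0B: "d0 \<in> {-int B..int B}" unfolding d0_def B_def by auto
  have sm: "g = (\<Sum>d\<in>{-int B..int B}. f d)" unfolding f_def using d0B by simp
  have hdf: "\<forall>d. hdeg d (f d)" unfolding f_def g_def d0_def using hd_gen[OF gen] hd_zero by auto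
  have lv: "\<exists>L. lev (f (int k)) (L + k) L"
  proof (cases "int k = d0")
    case True
    hence lm: "length \<mu> = length \<nu> + k" unfolding d0_def by simp
    have "lev g (length \<nu> + k) (length \<nu>)" unfolding lev_def
    proof
      fix \<alpha> assume a: "\<alpha> \<in> Wd (length \<nu>)"
      have nu: "\<nu> \<in> Wd (length \<nu>)" using gen unfolding Wd_def by simp
      have mu: "\<mu> \<in> Wd (length \<nu> + k)" using gen lm unfolding Wd_def by simp
      have "g * sw \<alpha> = sw \<mu> * (if \<nu> = \<alpha> then 1 else 0)" unfolding g_def
        using sw_orth[OF nu a] by (simp add: mult.assoc)
      thus "g * sw \<alpha> \<in> V (length \<nu> + k)" using V_sw[OF mu] by (cases "\<nu> = \<alpha>") auto
    qed
    thus ?thesis unfolding f_def using True by auto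
  next
    case False thus ?thesis unfolding f_def using lev_zero by auto
  qed
  show ?case using z sm hdf lv unfolding g_def by blast
next
  case (add a b)
  then obtain B1 f1 L1 where A: "\<forall>d. int B1 < \<bar>d\<bar> \<longrightarrow> f1 d = 0" "a = (\<Sum>d\<in>{-int B1..int B1}. f1 d)"
    "\<forall>d. hdeg d (f1 d)" "lev (f1 (int k)) (L1 + k) L1" by blast
  from add obtain B2 f2 L2 where B: "\<forall>d. int B2 < \<bar>d\<bar> \<longrightarrow> f2 d = 0" "b = (\<Sum>d\<in>{-int B2..int B2}. f2 d)"
    "\<forall>d. hdeg d (f2 d)" "lev (f2 (int k)) (L2 + k) L2" by blast
  define B' where "B' = max B1 B2"
  define f where "f d = f1 d + f2 d" for d
  have z: "\<forall>d. int B' < \<bar>d\<bar> \<longrightarrow> f d = 0" unfolding f_def B'_def using A(1) B(1) by auto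
  have "a + b = (\<Sum>d\<in>{-int B'..int B'}. f1 d) + (\<Sum>d\<in>{-int B'..int B'}. f2 d)"
    using sum_extend[OF A(1), of B'] sum_extend[OF B(1), of B'] A(2) B(2) unfolding B'_def by simp
  hence sm: "a + b = (\<Sum>d\<in>{-int B'..int B'}. f d)" unfolding f_def by (simp add: sum.distrib)
  have hdf: "\<forall>d. hdeg d (f d)" unfolding f_def using A(3) B(3) hd_add by blast
  have "lev (f (int k)) ((L1 + L2) + k) (L1 + L2)" unfolding f_def
    by (intro lev_add lev_refine'[OF A(4)] lev_refine'[OF B(4)]) auto
  thus ?case using z sm hdf by blast
next
  case (scl a c)
  then obtain B1 f1 L1 where A: "\<forall>d. int B1 < \<bar>d\<bar> \<longrightarrow> f1 d = 0" "a = (\<Sum>d\<in>{-int B1..int B1}. f1 d)"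
    "\<forall>d. hdeg d (f1 d)" "lev (f1 (int k)) (L1 + k) L1" by blast
  define f where "f d = sc c (f1 d)" for d
  have z: "\<forall>d. int B1 < \<bar>d\<bar> \<longrightarrow> f d = 0" unfolding f_def using A(1) by auto
  have sm: "sc c a = (\<Sum>d\<in>{-int B1..int B1}. f d)" unfolding f_def A(2) by (simp add: sc_sum_right)
  have hdf: "\<forall>d. hdeg d (f d)" unfolding f_def using A(3) hd_sc by blast
  have "lev (f (int k)) (L1 + k) L1" unfolding f_def by (rule lev_sc[OF A(4)])
  thus ?case using z sm hdf by blast
qed

lemma proj_approx:
  assumes a: "a \<in> Pol" and hx: "hdeg (int k) x"
  shows "\<exists>q L. lev q (L + k) L \<and> norm (x - q) \<le> norm (x - a)"
proof -
  obtain B f L where D: "\<forall>d. int B < \<bar>d\<bar> \<longrightarrow> f d = 0" "a = (\<Sum>d\<in>{-int B..int B}. f d)"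
    "\<forall>d. hdeg d (f d)" "lev (f (int k)) (L + k) L"
    using decomp[OF a, of k] by blast
  define m where "m = 2 * B + k + 1"
  have mpos: "m > 0" unfolding m_def by simp
  define z where "z = cis (2 * pi / m)"
  have zu: "cmod (z ^ j) = 1" for j unfolding z_def by (simp add: norm_power)
  define E where "E y = sc (1 / of_nat m) (\<Sum>j<m. sc ((z ^ j) powi (- int k)) (\<omega> (z ^ j) y))" for y
  have E_diff: "E (y1 - y2) = E y1 - E y2" for y1 y2
    unfolding E_def by (simp add: hom_basic(8)[OF om_hom[OF zu]] sc_diff_right sum_subtractf)
  have E_add: "E (y1 + y2) = E y1 + E y2" for y1 y2
    unfolding E_def by (simp add: hom_basic(1)[OF om_hom[OF zu]] sc_add_right sum.distrib)
  have E_zero: "E 0 = 0" unfolding E_def by (simp add: hom_basic(6)[OF om_hom[OF zu]])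
  have E_sum: "E (\<Sum>d\<in>S. g d) = (\<Sum>d\<in>S. E (g d))" if "finite S" for S and g :: "int \<Rightarrow> 'a"
    using that by (induction S rule: finite_induct) (auto simp: E_zero E_add)
  have E_norm: "norm (E y) \<le> norm y" for y
  proof -
    have "norm (\<Sum>j<m. sc ((z ^ j) powi (- int k)) (\<omega> (z ^ j) y)) \<le> (\<Sum>j<m. norm y)"
    proof (rule sum_norm_le)
      fix j
      have "norm (sc ((z ^ j) powi (- int k)) (\<omega> (z ^ j) y)) = norm (\<omega> (z ^ j) y)"
        using zu[of j] by (simp add: norm_sc norm_power_int)
      also have "\<dots> \<le> norm y" by (rule hom_contr[OF om_hom[OF zu]])
      finally show "norm (sc ((z ^ j) powi (- int k)) (\<omega> (z ^ j) y)) \<le> norm y" .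
    qed
    also have "\<dots> = real m * norm y" by simp
    finally show ?thesis unfolding E_def using mpos by (simp add: norm_sc norm_divide field_simps)
  qed
  have E_hd: "E y = (if d = int k then y else 0)" if hy: "hdeg d y" and dm: "\<bar>d - int k\<bar> < int m" for d y
  proof -
    have z0: "z ^ j \<noteq> 0" for j using zu[of j] by (metis norm_zero zero_neq_one)
    have "(\<Sum>j<m. sc ((z ^ j) powi (- int k)) (\<omega> (z ^ j) y)) = (\<Sum>j<m. sc ((z powi (d - int k)) ^ j) y)"
    proof (rule sum.cong)
      fix j assume "j \<in> {..<m}"
      have "\<omega> (z ^ j) y = sc ((z ^ j) powi d) y" using hy zu unfolding hdeg_def by blast
      hence "sc ((z ^ j) powi (- int k)) (\<omega> (z ^ j) y) = sc ((z ^ j) powi (- int k) * (z ^ j) powi d) y"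
        by (simp add: sc_sc)
      also have "(z ^ j) powi (- int k) * (z ^ j) powi d = (z ^ j) powi (d - int k)"
        using power_int_add[of "z ^ j" "- int k" d] z0[of j] by (simp add: add.commute)
      also have "\<dots> = (z powi (d - int k)) ^ j"
        by (simp add: power_int_power power_int_power' mult.commute)
      finally show "sc ((z ^ j) powi (- int k)) (\<omega> (z ^ j) y) = sc ((z powi (d - int k)) ^ j) y" .
    qed simp
    also have "\<dots> = sc (\<Sum>j<m. (z powi (d - int k)) ^ j) y" by (rule sc_sum_left[symmetric])
    finally have S: "(\<Sum>j<m. sc ((z ^ j) powi (- int k)) (\<omega> (z ^ j) y)) = sc (\<Sum>j<m. (z powi (d - int k)) ^ j) y" .
    have e: "E y = sc (1 / of_nat m) (sc (\<Sum>j<m. (z powi (d - int k)) ^ j) y)" unfolding E_def S ..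
    show ?thesis
    proof (cases "d = int k")
      case True
      thus ?thesis unfolding e using mpos by (simp add: sc_sc)
    next
      case False
      have "\<not> int m dvd (d - int k)"
      proof
        assume "int m dvd (d - int k)"
        hence "\<bar>int m\<bar> \<le> \<bar>d - int k\<bar>" using False by (intro dvd_imp_le_int) auto
        thus False using dm by simp
      qed
      hence "(\<Sum>j<m. (z powi (d - int k)) ^ j) = 0" unfolding z_def by (rule root_sum[OF mpos])
      thus ?thesis unfolding e using False by simp
    qed
  qed
  have Ex: "E x = x" using E_hd[OF hx] mpos by simp
  have Ea: "E a = f (int k)"
  proof -
    have "E a = (\<Sum>d\<in>{-int B..int B}. E (f d))" unfolding D(2) by (rule E_sum) simp
    also have "\<dots> = (\<Sum>d\<in>{-int B..int B}. if d = int k then f d else 0)"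
    proof (rule sum.cong)
      fix d assume "d \<in> {-int B..int B}"
      hence "\<bar>d - int k\<bar> < int m" unfolding m_def by auto
      thus "E (f d) = (if d = int k then f d else 0)" using E_hd D(3) by blast
    qed simp
    also have "\<dots> = f (int k)" using D(1) by (auto simp: sum.delta')
    finally show ?thesis .
  qed
  have "x - f (int k) = E (x - a)" using Ex Ea E_diff by simp
  hence "norm (x - f (int k)) \<le> norm (x - a)" using E_norm by simp
  thus ?thesis using D(4) by blast
qed

lemma approx:
  assumes hx: "hdeg (int k) x" and e: "e > 0"
  shows "\<exists>q L. lev q (L + k) L \<and> norm (x - q) < e"
proof -
  have "x \<in> closure Pol" using closure_Pol by simp
  then obtain a where a: "a \<in> Pol" "dist a x < e" using e closure_approachable by blast
  obtain q L where "lev q (L + k) L" "norm (x - q) \<le> norm (x - a)" using proj_approx[OF a(1) hx] by blast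
  moreover have "norm (x - a) < e" using a(2) by (simp add: dist_norm norm_minus_commute)
  ultimately show ?thesis by force
qed

end



context cg
begin

lemma st_tendsto: "X \<longlonglongrightarrow> l \<Longrightarrow> (\<lambda>j. st (X j)) \<longlonglongrightarrow> st l"
  by (rule bounded_linear.tendsto[OF bl_st])

lemma stmult_tendsto: "X \<longlonglongrightarrow> l \<Longrightarrow> (\<lambda>j. st (X j) * X j) \<longlonglongrightarrow> st l * l"
  by (intro tendsto_mult st_tendsto)

lemma multst_tendsto: "X \<longlonglongrightarrow> l \<Longrightarrow> (\<lambda>j. X j * st (X j)) \<longlonglongrightarrow> l * st l"
  by (intro tendsto_mult st_tendsto)

lemma hs_mono_left:
  assumes "norm w \<le> 1" shows "hs (w * b) L \<le> hs b L"
  unfolding hs_def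
proof (rule sum_mono)
  fix \<alpha>
  have "norm (w * b * sw \<alpha>) \<le> norm w * norm (b * sw \<alpha>)" by (metis mult.assoc norm_mult_ineq)
  also have "\<dots> \<le> norm (b * sw \<alpha>)" using assms mult_left_le_one_le[of "norm (b * sw \<alpha>)" "norm w"] by (simp add: mult.commute)
  finally show "(norm (w * b * sw \<alpha>))\<^sup>2 \<le> (norm (b * sw \<alpha>))\<^sup>2" by (simp add: power_mono)
qed

lemma T_const: "sc (complex_of_real r) (1::'a) \<in> Dm" "T (sc (complex_of_real r) 1) = complex_of_real r"
  using T_stab[OF Phi_const[of 0]] by auto

lemma main_pos:
  assumes kp: "k > 0" and hx: "hdeg (int k) x" and nrm: "st x * x = x * st x"
  shows "x = 0"
proof (rule ccontr)
  assume x0: "x \<noteq> 0"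
  have npos': "real n > 1" using n2 by simp
  have "\<forall>j. \<exists>q L. lev q (L + k) L \<and> norm (x - q) < inverse (real (Suc j))"
    using approx[OF hx] by simp
  then obtain Q Lv where QL: "\<And>j. lev (Q j) (Lv j + k) (Lv j)" "\<And>j. norm (x - Q j) < inverse (real (Suc j))"
    by metis
  have Qlim: "Q \<longlonglongrightarrow> x"
  proof -
    have "(\<lambda>j. Q j - x) \<longlonglongrightarrow> 0"
    proof (rule Lim_null_comparison[OF _ LIMSEQ_inverse_real_of_nat])
      show "\<forall>\<^sub>F j in sequentially. norm (Q j - x) \<le> inverse (real (Suc j))"
        using QL(2) by (auto simp: norm_minus_commute less_imp_le)
    qed
    thus ?thesis by (simp add: LIM_zero_iff)
  qed
  have D1: "st (Q j) * Q j \<in> Dm" for j using T_lev(1)[OF QL(1)] .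
  have lst: "lev (st (Q j)) (Lv j) (Lv j + k)" for j by (rule lev_st[OF QL(1)])
  have D2: "Q j * st (Q j) \<in> Dm" for j using T_lev(1)[OF lst] by simp
  have T12: "T (Q j * st (Q j)) = T (st (Q j) * Q j) / complex_of_real (real n ^ k)" for j
  proof -
    have "T (Q j * st (Q j)) = complex_of_real (hs (st (Q j)) (Lv j + k) / real n ^ (Lv j + k))"
      using T_lev(2)[OF lst] by simp
    also have "hs (st (Q j)) (Lv j + k) = hs (Q j) (Lv j)" by (rule hs_swap[OF QL(1)])
    also have "hs (Q j) (Lv j) / real n ^ (Lv j + k) = (hs (Q j) (Lv j) / real n ^ Lv j) / real n ^ k"
      by (simp add: power_add)
    finally show ?thesis using T_lev(2)[OF QL(1)] by (simp only: of_real_divide)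
  qed
  have L1: "(\<lambda>j. T (st (Q j) * Q j)) \<longlonglongrightarrow> T (st x * x)" by (rule T_closed(2)[OF D1 stmult_tendsto[OF Qlim]])
  have L2: "(\<lambda>j. T (Q j * st (Q j))) \<longlonglongrightarrow> T (x * st x)" by (rule T_closed(2)[OF D2 multst_tendsto[OF Qlim]])
  have "(\<lambda>j. T (Q j * st (Q j))) \<longlonglongrightarrow> T (st x * x) / complex_of_real (real n ^ k)"
    unfolding T12 using npos' by (intro tendsto_intros L1) simp
  hence "T (x * st x) = T (st x * x) / complex_of_real (real n ^ k)" using L2 LIMSEQ_unique by blast
  hence "T (x * st x) = T (x * st x) / complex_of_real (real n ^ k)" using nrm by simp
  moreover have "real n ^ k > 1" using npos' kp by simp
  ultimately have Tx: "T (x * st x) = 0"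
    by (metis div_by_1 nonzero_divide_eq_eq of_real_eq_1_iff less_irrefl divide_cancel_left of_real_eq_0_iff)
  define sq where "sq j = Re (T (Q j * st (Q j)))" for j
  have sqlim: "sq \<longlonglongrightarrow> 0" unfolding sq_def using tendsto_Re[OF L2] Tx by simp
  define e where "e = norm x / 5"
  have epos: "e > 0" unfolding e_def using x0 by simp
  obtain q L where q: "lev q (L + k) L" "norm (x - q) < e" using approx[OF hx epos] by blast
  obtain v where v: "v \<in> V L" "norm v = 1" "norm q - e \<le> norm (q * v)" using opn[OF q(1) epos] by blast
  define c where "c = norm (q * v)"
  have nxq: "norm x \<le> norm q + norm (x - q)" by (metis add.commute diff_add_cancel norm_triangle_ineq)
  have c3: "c \<ge> 3 * e" using v(3) q(2) nxq unfolding c_def e_def by linarith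
  have cpos: "c > 0" using c3 epos by linarith
  have qvV: "q * v \<in> V (L + k)" by (rule lev_V[OF q(1) v(1)])
  define u where "u = sc (complex_of_real (1 / c)) (q * v)"
  have uV: "u \<in> V (L + k)" unfolding u_def by (rule V_sc[OF qvV])
  have nu: "norm u = 1" unfolding u_def c_def norm_sc using cpos unfolding c_def by (simp add: norm_divide)
  have uqv: "st u * (q * v) = sc (complex_of_real c) 1"
  proof -
    have "st u * (q * v) = sc (complex_of_real (1 / c)) (st (q * v) * (q * v))"
      unfolding u_def by (simp add: st_sc sc_mult_left)
    also have "st (q * v) * (q * v) = sc (complex_of_real (c\<^sup>2)) 1" unfolding c_def by (rule V_sq'[OF qvV])
    also have "sc (complex_of_real (1 / c)) (sc (complex_of_real (c\<^sup>2)) (1::'a)) = sc (complex_of_real c) 1"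
      using cpos by (simp add: sc_sc power2_eq_square)
    finally show ?thesis .
  qed
  define b where "b j = Q j * v" for j
  define z where "z j = st u * b j" for j
  have lQ: "lev (Q j) (Lv j + L + k) (Lv j + L)" for j
    using lev_refine'[OF QL(1), of j "Lv j + L"] by simp
  have lv: "lev v (Lv j + L) (Lv j)" for j using lev_vec[OF v(1), of "Lv j"] by (simp add: add.commute)
  have lb: "lev (b j) (Lv j + L + k) (Lv j)" for j unfolding b_def by (rule lev_mult[OF lQ lv])
  have lu: "lev (st u) (Lv j) (Lv j + L + k)" for j
    using lev_st_vec[OF uV, of "Lv j"] by (simp add: add.commute add.left_commute)
  have lz: "lev (z j) (Lv j) (Lv j)" for j unfolding z_def by (rule lev_mult[OF lu lb])
  have TQ: "T (Q j * st (Q j)) = complex_of_real (hs (st (Q j)) (Lv j + L + k) / real n ^ (Lv j + L + k))" for j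
    using T_lev(2)[OF lev_st[OF lQ]] by simp
  have sqv: "sq j = hs (st (Q j)) (Lv j + L + k) / real n ^ (Lv j + L + k)" for j
    unfolding sq_def TQ by simp
  define rz where "rz j = hs (z j) (Lv j) / real n ^ Lv j" for j
  have Tz: "T (st (z j) * z j) = complex_of_real (rz j)" for j unfolding rz_def by (rule T_lev(2)[OF lz])
  have Dz: "st (z j) * z j \<in> Dm" for j by (rule T_lev(1)[OF lz])
  have rz0: "rz j \<ge> 0" for j unfolding rz_def using hs_nonneg by simp
  have rzb: "rz j \<le> real n ^ (L + k) * sq j" for j
  proof -
    have "hs (z j) (Lv j) \<le> hs (b j) (Lv j)" unfolding z_def using hs_mono_left[of "st u"] nu by simp
    also have "hs (b j) (Lv j) = hs (st (b j)) (Lv j + L + k)" by (rule hs_swap[OF lb, symmetric])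
    also have "st (b j) = st v * st (Q j)" unfolding b_def by (simp add: st_mult)
    also have "hs (st v * st (Q j)) (Lv j + L + k) \<le> hs (st (Q j)) (Lv j + L + k)"
      using hs_mono_left[of "st v"] v(2) by simp
    finally have "hs (z j) (Lv j) \<le> hs (st (Q j)) (Lv j + L + k)" .
    hence "rz j \<le> hs (st (Q j)) (Lv j + L + k) / real n ^ Lv j" unfolding rz_def
      using npos' by (simp add: divide_right_mono)
    also have "\<dots> = real n ^ (L + k) * sq j" unfolding sqv using npos'
      by (simp add: power_add field_simps)
    finally show ?thesis .
  qed
  have rzlim: "rz \<longlonglongrightarrow> 0"
  proof (rule Lim_null_comparison)
    show "\<forall>\<^sub>F j in sequentially. norm (rz j) \<le> real n ^ (L + k) * sq j" using rz0 rzb by simp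
    show "(\<lambda>j. real n ^ (L + k) * sq j) \<longlonglongrightarrow> 0" using tendsto_mult_left[OF sqlim] by simp
  qed
  define zz where "zz = st u * (x * v)"
  have zlim: "z \<longlonglongrightarrow> zz" unfolding z_def b_def zz_def by (intro tendsto_intros Qlim)
  have "(\<lambda>j. T (st (z j) * z j)) \<longlonglongrightarrow> T (st zz * zz)" by (rule T_closed(2)[OF Dz stmult_tendsto[OF zlim]])
  moreover have "(\<lambda>j. T (st (z j) * z j)) \<longlonglongrightarrow> 0" unfolding Tz using tendsto_of_real[OF rzlim] by simp
  ultimately have Tzz: "T (st zz * zz) = 0" using LIMSEQ_unique by blast
  have Dzz: "st zz * zz \<in> Dm" by (rule T_closed(1)[OF Dz stmult_tendsto[OF zlim]])
  define dl where "dl = zz - sc (complex_of_real c) 1"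
  have dl_eq: "dl = st u * (x - q) * v" unfolding dl_def zz_def using uqv
    by (simp add: algebra_simps)
  have ndl: "norm dl \<le> e"
  proof -
    have "norm dl \<le> norm (st u) * norm (x - q) * norm v" unfolding dl_eq by (rule norm3)
    thus ?thesis using nu v(2) q(2) by simp
  qed
  have zz_eq: "zz = dl + sc (complex_of_real c) 1" unfolding dl_def by simp
  have "st zz * zz - sc (complex_of_real (c\<^sup>2)) 1 = st dl * dl + sc (complex_of_real c) dl + sc (complex_of_real c) (st dl)"
    unfolding zz_eq by (simp add: st_add st_sc algebra_simps sc_mult_left sc_mult_right sc_sc power2_eq_square sc_add_right)
  hence nz: "norm (st zz * zz - sc (complex_of_real (c\<^sup>2)) 1) \<le> e * e + c * e + c * e"
  proof -
    assume eq: "st zz * zz - sc (complex_of_real (c\<^sup>2)) 1 = st dl * dl + sc (complex_of_real c) dl + sc (complex_of_real c) (st dl)"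
    have a1: "norm (st dl * dl) \<le> e * e"
      using norm_mult_ineq[of "st dl" dl] ndl mult_mono[OF ndl ndl] by simp
    have a2: "norm (sc (complex_of_real c) dl) \<le> c * e" using ndl cpos by (simp add: norm_sc mult_left_mono)
    have a3: "norm (sc (complex_of_real c) (st dl)) \<le> c * e" using ndl cpos by (simp add: norm_sc mult_left_mono)
    show ?thesis unfolding eq
      using norm_triangle_ineq[of "st dl * dl + sc (complex_of_real c) dl" "sc (complex_of_real c) (st dl)"]
        norm_triangle_ineq[of "st dl * dl" "sc (complex_of_real c) dl"] a1 a2 a3 by linarith
  qed
  have "cmod (T (st zz * zz) - T (sc (complex_of_real (c\<^sup>2)) 1)) \<le> norm (st zz * zz - sc (complex_of_real (c\<^sup>2)) 1)"
    by (rule T_lip[OF Dzz T_const(1)])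
  moreover have "cmod (T (st zz * zz) - T (sc (complex_of_real (c\<^sup>2)) 1)) = c\<^sup>2"
    unfolding Tzz T_const(2) by (simp only: diff_0 norm_minus_cancel norm_of_real) simp
  ultimately have "c\<^sup>2 \<le> e * e + c * e + c * e" using nz by linarith
  hence A: "c * c \<le> e * e + 2 * (c * e)" by (simp add: power2_eq_square)
  have "c * (c - 2 * e) \<ge> 3 * e * e" using c3 epos by (intro mult_mono) auto
  hence B: "c * c - 2 * (c * e) \<ge> 3 * (e * e)" by (simp add: algebra_simps)
  have "e * e > 0" using epos by simp
  thus False using A B by linarith
qed

lemma main_int:
  assumes k: "k \<noteq> 0" and hx: "hdeg k x" and nrm: "st x * x = x * st x"
  shows "x = 0"
proof (cases "k > 0")
  case True
  hence "k = int (nat k)" by simp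
  hence "hdeg (int (nat k)) x" using hx by simp
  thus ?thesis using main_pos[of "nat k" x] True nrm by simp
next
  case False
  hence kn: "- k > 0" using k by simp
  have hx': "hdeg (int (nat (- k))) (st x)" unfolding hdeg_def
  proof (intro allI impI)
    fix t :: complex assume t: "cmod t = 1"
    have "\<omega> t (st x) = st (\<omega> t x)" by (rule hom_basic(4)[OF om_hom[OF t]])
    also have "\<dots> = st (sc (t powi k) x)" using hx t unfolding hdeg_def by simp
    also have "\<dots> = sc (inverse (t powi k)) (st x)" by (simp add: st_sc cnj_unit[OF t] power_int_inverse)
    also have "inverse (t powi k) = t powi (int (nat (- k)))" using kn by (simp add: power_int_minus[symmetric])
    finally show "\<omega> t (st x) = sc (t powi int (nat (- k))) (st x)" .
  qed
  have "st x = 0" by (rule main_pos[OF _ hx']) (use kn nrm in auto)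
  thus ?thesis by (metis st_st st_zero)
qed

end

theorem lemma4p1:
  fixes sc :: "complex \<Rightarrow> 'a::{real_normed_algebra_1,banach} \<Rightarrow> 'a"
    and st :: "'a \<Rightarrow> 'a" and s :: "nat \<Rightarrow> 'a" and n :: nat
    and \<omega> :: "complex \<Rightarrow> 'a \<Rightarrow> 'a" and k :: int and x :: 'a
  assumes cstar: "cstar_algebra sc st"
    and n2: "n \<ge> 2"
    and isom: "\<forall>i<n. st (s i) * s i = 1"
    and cuntz: "(\<Sum>i<n. s i * st (s i)) = 1"
    and gen: "cstar_gen sc st (s ` {..<n}) = UNIV"
    and gauge: "\<forall>t. cmod t = 1 \<longrightarrow> star_hom sc st (\<omega> t) \<and> bij (\<omega> t) \<and>
                    (\<forall>i<n. \<omega> t (s i) = sc t (s i))"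
    and k: "k \<noteq> 0"
    and spec: "\<forall>t. cmod t = 1 \<longrightarrow> \<omega> t x = sc (t powi k) x"
    and normal: "st x * x = x * st x"
  shows "x = 0"
proof -
  interpret cg sc st s n \<omega>
  proof (unfold_locales)
    show "cstar_algebra sc st" by (rule cstar)
    show "2 \<le> n" by (rule n2)
    show "\<forall>i<n. st (s i) * s i = 1" by (rule isom)
    show "(\<Sum>i<n. s i * st (s i)) = 1" by (rule cuntz)
    show "cstar_gen sc st (s ` {..<n}) = UNIV" by (rule gen)
    show "\<forall>t. cmod t = 1 \<longrightarrow> star_hom sc st (\<omega> t) \<and> (\<forall>i<n. \<omega> t (s i) = sc t (s i))" using gauge by blast
  qed
  have "hdeg k x" unfolding hdeg_def using spec by blast
  thus ?thesis by (rule main_int[OF k _ normal])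
qed


end
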